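(* Let $P$, $\mu$ and $\nu$ be as follows: $P$ irreducible semi-isotropic on $\mathbb T=\mathbb T_q$, $\mu$ the associated measure on $\Gamma$, $\nu$ a $\mu$-invariant Radon measure on $\partial^*\mathbb T$. Set $\mu_{k,r}=\sum_{x\in T_{k,r}}p(o,x)$ and $a_j=\nu(\Omega_j)$, $j\ge0$. Then $\nu$ is determined by the numbers $(a_j)_{j\ge0}$, and these satisfy $$a_0=\sum_{k=1}^\infty\sum_{r=1}^\infty\frac{a_r}{(q-1)q^{k-1}}\mu_{k,r}+\sum_{k=1}^\infty\frac{a_0}{q^k}\mu_{k,0}+\sum_{r=0}^\infty(a_0+\dots+a_r)\mu_{0,r},$$ and for each $j\ge1$, $$a_j=\sum_{k=0}^{j-1}\sum_{r=0}^\infty a_{j+r-k}\mu_{k,r}+\sum_{k=j+1}^\infty\sum_{r=1}^\infty\frac{a_r}{q^{k-j}}\mu_{k,r}+\frac{q-1}{q}\sum_{k=j}^\infty\frac{a_0}{q^{k-j}}\mu_{k,0}+\sum_{r=1}^\infty\Big(a_0+\dots+a_{r-1}+\frac{q-2}{q-1}a_r\Big)\mu_{j,r}.$$ In particular, if $p(x,y)=0$ whenever $d(x,y)>N$, then $a_j=\sum_{n=-N}^N a_{j+n}\tilde\mu(n)$ for all $j>N$, where $\tilde\mu(n)=\sum_{r-k=n}\mu_{k,r}$.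
   Context: Tree notation: $\mathbb T=\mathbb T_q$ ($q\ge2$) is the homogeneous tree of degree $q+1$ with graph metric $d$, a fixed end $\omega$ and a root $o$. Each vertex $x$ has a unique neighbour $x^-$ (its predecessor) on the geodesic ray from $x$ to $\omega$. $\mathrm{hor}(o)=0$, $\mathrm{hor}(x)=\mathrm{hor}(x^-)+1$. Ancestors of $x$: $x,x^-,(x^-)^-,\dots$; $x\curlywedge y$ is the common ancestor of $x,y$ with maximal $\mathrm{hor}$; $\mathrm{up}(x,y)=\mathrm{hor}(x)-\mathrm{hor}(x\curlywedge y)$. $\partial\mathbb T$ is the space of ends, $\partial^*\mathbb T=\partial\mathbb T\setminus\{\omega\}$. For $\xi\in\partial^*\mathbb T$, $x\curlywedge\xi$ is the vertex of the bi-infinite geodesic from $\omega$ to $\xi$ which is an ancestor of $x$ and has maximal $\mathrm{hor}$, and $\mathrm{up}(x,\xi)=\mathrm{hor}(x)-\mathrm{hor}(x\curlywedge\xi)$. A transition matrix $P$ on $\mathbb T$ is semi-isotropic if $p(x,y)$ depends only on $(\mathrm{up}(x,y),\mathrm{up}(y,x))$. Sets: $T_{k,r}(x)=\{y:\mathrm{up}(x,y)=k,\ \mathrm{up}(y,x)=r\}$, $\Omega_k(x)=\{\eta\in\partial^*\mathbb T:\mathrm{up}(x,\eta)=k\}$; $T_{k,r}=T_{k,r}(o)$, $\Omega_k=\Omega_k(o)$. Group: $\Gamma=\mathrm{Aff}(\mathbb T)$ is the group of all automorphisms of $\mathbb T$ fixing $\omega$; $dg$ is left Haar measure normalized so that the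 stabilizer $\Gamma_o$ of $o$ has measure $1$; $\mu(dg)=p(o,go)\,dg$. For a Radon measure $\nu$ on $\partial^*\mathbb T$, $\mu*\nu(E)=\int_\Gamma\nu(g^{-1}E)\,\mu(dg)$; $\nu$ is $\mu$-invariant if $\mu*\nu=\nu$. *)

theory Defs
  imports "HOL-Analysis.Analysis"
begin

text \<open>Concrete model of the homogeneous tree T_q (degree q+1) with a fixed end omega.
A vertex is a pair (h, f): h = hor(x) and f :: int => nat lists the digits
(values < q) of the path from omega; f n = 0 for n >= h and for n very negative.
The predecessor of (h, f) is (h - 1, f(h-1 := 0)); the q successors of (h, f)
are (h + 1, f(h := i)), i < q.  Ends in the boundary minus omega are digit sequences
xi :: int => nat with values < q vanishing for very negative indices.\<close>

type_synonym vtx = "int \<times> (int \<Rightarrow> nat)"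
type_synonym bend = "int \<Rightarrow> nat"

definition verts :: "nat \<Rightarrow> vtx set" where
  "verts q = {(h, f). (\<forall>n. f n < q) \<and> (\<forall>n\<ge>h. f n = 0) \<and> (\<exists>m. \<forall>n<m. f n = 0)}"

definition pred :: "vtx \<Rightarrow> vtx" where
  "pred x = (fst x - 1, (snd x)(fst x - 1 := 0))"

definition hor :: "vtx \<Rightarrow> int" where
  "hor x = fst x"

definition root :: vtx where
  "root = (0, \<lambda>_. 0)"

definition is_anc :: "vtx \<Rightarrow> vtx \<Rightarrow> bool" where
  "is_anc z x \<longleftrightarrow> (\<exists>n. (pred ^^ n) x = z)"

definition meet :: "vtx \<Rightarrow> vtx \<Rightarrow> vtx" where
  "meet x y = (THE z. is_anc z x \<and> is_anc z y \<and>
      (\<forall>w. is_anc w x \<and> is_anc w y \<longrightarrow> hor w \<le> hor z))"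

definition up :: "vtx \<Rightarrow> vtx \<Rightarrow> nat" where
  "up x y = nat (hor x - hor (meet x y))"

definition tdist :: "vtx \<Rightarrow> vtx \<Rightarrow> nat" where
  "tdist x y = up x y + up y x"

definition ends :: "nat \<Rightarrow> bend set" where
  "ends q = {xi. (\<forall>n. xi n < q) \<and> (\<exists>m. \<forall>n<m. xi n = 0)}"

text \<open>The vertex at horocycle level h on the bi-infinite geodesic from omega to xi.\<close>
definition geo :: "bend \<Rightarrow> int \<Rightarrow> vtx" where
  "geo xi h = (h, \<lambda>n. if n < h then xi n else 0)"

definition on_geo :: "vtx \<Rightarrow> bend \<Rightarrow> bool" where
  "on_geo x xi \<longleftrightarrow> (\<exists>h. x = geo xi h)"

definition meet_end :: "vtx \<Rightarrow> bend \<Rightarrow> vtx" where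
  "meet_end x xi = (THE z. on_geo z xi \<and> is_anc z x \<and>
      (\<forall>w. on_geo w xi \<and> is_anc w x \<longrightarrow> hor w \<le> hor z))"

definition up_end :: "vtx \<Rightarrow> bend \<Rightarrow> nat" where
  "up_end x xi = nat (hor x - hor (meet_end x xi))"

definition Tkr :: "nat \<Rightarrow> nat \<Rightarrow> nat \<Rightarrow> vtx \<Rightarrow> vtx set" where
  "Tkr q k r x = {y \<in> verts q. up x y = k \<and> up y x = r}"

definition Omega :: "nat \<Rightarrow> nat \<Rightarrow> vtx \<Rightarrow> bend set" where
  "Omega q k x = {xi \<in> ends q. up_end x xi = k}"

definition end_top :: "nat \<Rightarrow> bend topology" where
  "end_top q = topology_generated_by {{xi \<in> ends q. on_geo x xi} | x. x \<in> verts q}"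

definition borel_sets_of :: "'a topology \<Rightarrow> 'a set set" where
  "borel_sets_of T = sigma_sets (topspace T) {U. openin T U}"

definition radon_on_ends :: "nat \<Rightarrow> bend measure \<Rightarrow> bool" where
  "radon_on_ends q nu \<longleftrightarrow> space nu = ends q \<and> sets nu = borel_sets_of (end_top q) \<and>
     (\<forall>K. compactin (end_top q) K \<longrightarrow> emeasure nu K < \<infinity>)"

text \<open>Aff(T): automorphisms of the tree fixing omega, i.e. bijections of the vertex set
commuting with the predecessor map (extended by the identity off the vertex set).\<close>
definition Aff :: "nat \<Rightarrow> (vtx \<Rightarrow> vtx) set" where
  "Aff q = {g. bij_betw g (verts q) (verts q) \<and> (\<forall>x\<in>verts q. g (pred x) = pred (g x)) \<and>
              (\<forall>x. x \<notin> verts q \<longrightarrow> g x = x)}"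

text \<open>Topology of pointwise convergence on Aff(T) (vertex set discrete).\<close>
definition aff_top :: "nat \<Rightarrow> (vtx \<Rightarrow> vtx) topology" where
  "aff_top q = topology_generated_by {{g \<in> Aff q. g x = y} | x y. x \<in> verts q \<and> y \<in> verts q}"

definition stab_root :: "nat \<Rightarrow> (vtx \<Rightarrow> vtx) set" where
  "stab_root q = {g \<in> Aff q. g root = root}"

definition is_left_haar :: "nat \<Rightarrow> (vtx \<Rightarrow> vtx) measure \<Rightarrow> bool" where
  "is_left_haar q m \<longleftrightarrow> space m = Aff q \<and> sets m = borel_sets_of (aff_top q) \<and>
     (\<forall>g\<in>Aff q. \<forall>A\<in>sets m. emeasure m ((\<lambda>h. g \<circ> h) ` A) = emeasure m A) \<and>
     (\<forall>K. compactin (aff_top q) K \<longrightarrow> emeasure m K < \<infinity>) \<and>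
     emeasure m (stab_root q) = 1"

definition act_end :: "nat \<Rightarrow> (vtx \<Rightarrow> vtx) \<Rightarrow> bend \<Rightarrow> bend" where
  "act_end q g xi = (THE eta. eta \<in> ends q \<and> (\<forall>x\<in>verts q. on_geo x xi \<longrightarrow> on_geo (g x) eta))"

text \<open>mu * nu (E) = integral of nu(g^-1 E) w.r.t. mu(dg) = p(o, g o) dg.\<close>
definition conv :: "nat \<Rightarrow> (vtx \<Rightarrow> vtx) measure \<Rightarrow> (vtx \<Rightarrow> vtx \<Rightarrow> real) \<Rightarrow> bend measure
                    \<Rightarrow> bend set \<Rightarrow> ennreal" where
  "conv q m p nu E = (\<integral>\<^sup>+ g. emeasure nu {xi \<in> ends q. act_end q g xi \<in> E} *
                              ennreal (p root (g root)) \<partial>m)"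

definition mu_invariant :: "nat \<Rightarrow> (vtx \<Rightarrow> vtx) measure \<Rightarrow> (vtx \<Rightarrow> vtx \<Rightarrow> real) \<Rightarrow> bend measure \<Rightarrow> bool" where
  "mu_invariant q m p nu \<longleftrightarrow> (\<forall>E\<in>sets nu. conv q m p nu E = emeasure nu E)"

definition transition_matrix :: "nat \<Rightarrow> (vtx \<Rightarrow> vtx \<Rightarrow> real) \<Rightarrow> bool" where
  "transition_matrix q p \<longleftrightarrow> (\<forall>x\<in>verts q. \<forall>y\<in>verts q. p x y \<ge> 0) \<and>
     (\<forall>x\<in>verts q. ((\<lambda>y. p x y) has_sum 1) (verts q))"

definition irreducible_tm :: "nat \<Rightarrow> (vtx \<Rightarrow> vtx \<Rightarrow> real) \<Rightarrow> bool" where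
  "irreducible_tm q p \<longleftrightarrow> (\<forall>x\<in>verts q. \<forall>y\<in>verts q.
      (x, y) \<in> {(u, v). u \<in> verts q \<and> v \<in> verts q \<and> p u v > 0}\<^sup>*)"

definition semi_isotropic :: "nat \<Rightarrow> (vtx \<Rightarrow> vtx \<Rightarrow> real) \<Rightarrow> bool" where
  "semi_isotropic q p \<longleftrightarrow> (\<forall>x\<in>verts q. \<forall>y\<in>verts q. \<forall>x'\<in>verts q. \<forall>y'\<in>verts q.
      up x y = up x' y' \<and> up y x = up y' x' \<longrightarrow> p x y = p x' y')"

definition mukr :: "nat \<Rightarrow> (vtx \<Rightarrow> vtx \<Rightarrow> real) \<Rightarrow> nat \<Rightarrow> nat \<Rightarrow> ennreal" where
  "mukr q p k r = ennreal (\<Sum>x\<in>Tkr q k r root. p root x)"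

definition mu_tilde :: "nat \<Rightarrow> (vtx \<Rightarrow> vtx \<Rightarrow> real) \<Rightarrow> int \<Rightarrow> ennreal" where
  "mu_tilde q p n = (\<Sum>k. if int k + n \<ge> 0 then mukr q p k (nat (int k + n)) else 0)"

end

theory Submission
  imports Defs
begin

definition tr :: "(int \<Rightarrow> nat) \<Rightarrow> int \<Rightarrow> int \<Rightarrow> nat" where
  "tr f L = (\<lambda>n. if n < L then f n else 0)"

lemma verts_iff: "(h, f) \<in> verts q \<longleftrightarrow> (\<forall>n. f n < q) \<and> (\<forall>n\<ge>h. f n = 0) \<and> (\<exists>m. \<forall>n<m. f n = 0)"
  by (simp add: verts_def)

lemma tr_self: "(h, f) \<in> verts q \<Longrightarrow> tr f h = f"
  by (auto simp: tr_def verts_def fun_eq_iff)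

lemma tr_tr: "L \<le> L' \<Longrightarrow> tr (tr f L') L = tr f L"
  by (auto simp: tr_def fun_eq_iff)

lemma tr_in_verts: "(h, f) \<in> verts q \<Longrightarrow> L \<le> h \<Longrightarrow> (L, tr f L) \<in> verts q"
  unfolding verts_def tr_def by auto

lemma pred_in_verts: "x \<in> verts q \<Longrightarrow> pred x \<in> verts q"
proof -
  assume "x \<in> verts q"
  then obtain h f m where x: "x = (h, f)" "\<forall>n. f n < q" "\<forall>n\<ge>h. f n = 0" "\<forall>n<m. f n = 0"
    by (auto simp: verts_def)
  then show ?thesis unfolding verts_def pred_def by (auto intro!: exI[of _ m])
qed

lemma funpow_pred: "(h, f) \<in> verts q \<Longrightarrow> (pred ^^ n) (h, f) = (h - int n, tr f (h - int n))"
proof (induction n)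
  case 0 then show ?case by (simp add: tr_self)
next
  case (Suc n)
  then show ?case by (auto simp: pred_def tr_def fun_eq_iff)
qed

lemma funpow_pred_verts: "x \<in> verts q \<Longrightarrow> (pred ^^ n) x \<in> verts q"
  by (induction n) (auto simp: pred_in_verts)

lemma is_anc_iff:
  assumes "(h, f) \<in> verts q"
  shows "is_anc z (h, f) \<longleftrightarrow> fst z \<le> h \<and> snd z = tr f (fst z)"
proof
  assume "is_anc z (h, f)"
  then obtain n where "(pred ^^ n) (h, f) = z" by (auto simp: is_anc_def)
  then show "fst z \<le> h \<and> snd z = tr f (fst z)" using funpow_pred[OF assms, of n] by auto
next
  assume a: "fst z \<le> h \<and> snd z = tr f (fst z)"
  have "(pred ^^ nat (h - fst z)) (h, f) = z"
    using funpow_pred[OF assms, of "nat (h - fst z)"] a by (cases z) auto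
  then show "is_anc z (h, f)" by (auto simp: is_anc_def)
qed

lemma ends_iff: "xi \<in> ends q \<longleftrightarrow> (\<forall>n. xi n < q) \<and> (\<exists>m. \<forall>n<m. xi n = 0)"
  by (simp add: ends_def)

lemma greatest_agree:
  assumes "\<forall>n<m1. (f1::int\<Rightarrow>nat) n = 0" "\<forall>n<m2. f2 n = 0"
  shows "\<exists>L. L \<le> H \<and> (\<forall>n<L. f1 n = f2 n) \<and> (\<forall>L'. L' \<le> H \<and> (\<forall>n<L'. f1 n = f2 n) \<longrightarrow> L' \<le> L)"
proof -
  define L0 where "L0 = min (min m1 m2) H"
  have L0: "L0 \<le> H" "\<forall>n<L0. f1 n = f2 n" using assms by (auto simp: L0_def)
  define S where "S = {L \<in> {L0..H}. \<forall>n<L. f1 n = f2 n}"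
  have fin: "finite S" by (rule finite_subset[of _ "{L0..H}"]) (auto simp: S_def)
  have ne: "L0 \<in> S" using L0 by (simp add: S_def)
  define L where "L = Max S"
  have LS: "L \<in> S" using fin ne unfolding L_def by (intro Max_in) auto
  have A: "L \<le> H" "\<forall>n<L. f1 n = f2 n" using LS by (auto simp: S_def)
  have B: "L' \<le> L" if "L' \<le> H \<and> (\<forall>n<L'. f1 n = f2 n)" for L'
  proof (cases "L' < L0")
    case True then show ?thesis using LS by (auto simp: S_def)
  next
    case False
    then have "L' \<in> S" using that by (auto simp: S_def)
    then show ?thesis using fin by (simp add: L_def)
  qed
  show ?thesis using A B by blast
qed

definition ml :: "int \<Rightarrow> (int \<Rightarrow> nat) \<Rightarrow> (int \<Rightarrow> nat) \<Rightarrow> int" where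
  "ml H f g = (GREATEST L. L \<le> H \<and> (\<forall>n<L. f n = g n))"

lemma ml_props:
  assumes "\<forall>n<m1. (f1::int\<Rightarrow>nat) n = 0" "\<forall>n<m2. f2 n = 0"
  shows "ml H f1 f2 \<le> H" "\<forall>n<ml H f1 f2. f1 n = f2 n"
    "\<And>L'. L' \<le> H \<Longrightarrow> (\<forall>n<L'. f1 n = f2 n) \<Longrightarrow> L' \<le> ml H f1 f2"
proof -
  obtain L where L: "L \<le> H" "\<forall>n<L. f1 n = f2 n" "\<forall>L'. L' \<le> H \<and> (\<forall>n<L'. f1 n = f2 n) \<longrightarrow> L' \<le> L"
    using greatest_agree[OF assms] by blast
  have e: "ml H f1 f2 = L" unfolding ml_def
    by (rule Greatest_equality) (use L in auto)
  show "ml H f1 f2 \<le> H" "\<forall>n<ml H f1 f2. f1 n = f2 n" using L e by auto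
  show "\<And>L'. L' \<le> H \<Longrightarrow> (\<forall>n<L'. f1 n = f2 n) \<Longrightarrow> L' \<le> ml H f1 f2" using L e by auto
qed

lemma ml_ge_iff:
  assumes "\<forall>n<m1. (f1::int\<Rightarrow>nat) n = 0" "\<forall>n<m2. f2 n = 0" "L \<le> H"
  shows "L \<le> ml H f1 f2 \<longleftrightarrow> (\<forall>n<L. f1 n = f2 n)"
proof
  assume "L \<le> ml H f1 f2"
  then show "\<forall>n<L. f1 n = f2 n" using ml_props(2)[OF assms(1,2), where H=H] by auto
next
  assume "\<forall>n<L. f1 n = f2 n"
  then show "L \<le> ml H f1 f2" using ml_props(3)[OF assms(1,2)] assms(3) by blast
qed

lemma ml_sym: "ml H f g = ml H g f"
  unfolding ml_def by metis

lemma verts_low: "(h, f) \<in> verts q \<Longrightarrow> \<exists>m. \<forall>n<m. f n = 0"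
  by (auto simp: verts_def)

lemma ends_low: "xi \<in> ends q \<Longrightarrow> \<exists>m. \<forall>n<m. xi n = 0"
  by (auto simp: ends_def)

lemma meet_eq:
  assumes x: "(h1, f1) \<in> verts q" and y: "(h2, f2) \<in> verts q"
  shows "meet (h1, f1) (h2, f2) = (ml (min h1 h2) f1 f2, tr f1 (ml (min h1 h2) f1 f2))"
proof -
  obtain m1 m2 where m: "\<forall>n<m1. f1 n = 0" "\<forall>n<m2. f2 n = 0" using verts_low[OF x] verts_low[OF y] by blast
  note P = ml_props[OF m, where H="min h1 h2"]
  define L where "L = ml (min h1 h2) f1 f2"
  have trL: "tr f2 L = tr f1 L" using P(2) by (auto simp: tr_def L_def)
  show ?thesis unfolding meet_def L_def[symmetric]
  proof (rule the_equality)
    show "is_anc (L, tr f1 L) (h1, f1) \<and> is_anc (L, tr f1 L) (h2, f2) \<and>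
      (\<forall>w. is_anc w (h1, f1) \<and> is_anc w (h2, f2) \<longrightarrow> hor w \<le> hor (L, tr f1 L))"
    proof (intro conjI allI impI)
      show "is_anc (L, tr f1 L) (h1, f1)" "is_anc (L, tr f1 L) (h2, f2)"
        using P(1) trL by (auto simp: is_anc_iff[OF x] is_anc_iff[OF y] L_def)
      fix w assume "is_anc w (h1, f1) \<and> is_anc w (h2, f2)"
      then have "fst w \<le> min h1 h2" "snd w = tr f1 (fst w)" "snd w = tr f2 (fst w)"
        by (auto simp: is_anc_iff[OF x] is_anc_iff[OF y])
      then have "\<forall>n<fst w. f1 n = f2 n" by (metis tr_def)
      then show "hor w \<le> hor (L, tr f1 L)" using P(3) \<open>fst w \<le> min h1 h2\<close> by (simp add: hor_def L_def)
    qed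
    fix z assume z: "is_anc z (h1, f1) \<and> is_anc z (h2, f2) \<and> (\<forall>w. is_anc w (h1, f1) \<and> is_anc w (h2, f2) \<longrightarrow> hor w \<le> hor z)"
    then have "fst z \<le> min h1 h2" "snd z = tr f1 (fst z)" "snd z = tr f2 (fst z)"
      by (auto simp: is_anc_iff[OF x] is_anc_iff[OF y])
    then have "\<forall>n<fst z. f1 n = f2 n" by (metis tr_def)
    then have le1: "fst z \<le> L" using P(3) \<open>fst z \<le> min h1 h2\<close> by (simp add: L_def)
    have "is_anc (L, tr f1 L) (h1, f1)" "is_anc (L, tr f1 L) (h2, f2)"
        using P(1) trL by (auto simp: is_anc_iff[OF x] is_anc_iff[OF y] L_def)
    then have "L \<le> fst z" using z by (auto simp: hor_def)
    then show "z = (L, tr f1 L)" using le1 \<open>snd z = tr f1 (fst z)\<close> by (cases z) auto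
  qed
qed

lemma up_eq:
  assumes "(h1, f1) \<in> verts q" "(h2, f2) \<in> verts q"
  shows "up (h1, f1) (h2, f2) = nat (h1 - ml (min h1 h2) f1 f2)"
  by (simp add: up_def meet_eq[OF assms] hor_def)

lemma geo_in_verts: "xi \<in> ends q \<Longrightarrow> geo xi h \<in> verts q"
  by (auto simp: geo_def verts_def ends_def)

lemma on_geo_iff:
  assumes "(h, f) \<in> verts q"
  shows "on_geo (h, f) xi \<longleftrightarrow> (\<forall>n<h. xi n = f n)"
  using assms by (auto simp: on_geo_def geo_def verts_def fun_eq_iff)

lemma meet_end_eq:
  assumes x: "(h, f) \<in> verts q" and xi: "xi \<in> ends q"
  shows "meet_end (h, f) xi = (ml h f xi, tr f (ml h f xi))"
proof -
  obtain m1 m2 where m: "\<forall>n<m1. f n = 0" "\<forall>n<m2. xi n = 0" using verts_low[OF x] ends_low[OF xi] by blast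
  note P = ml_props[OF m, where H=h]
  define L where "L = ml h f xi"
  have vL: "(L, tr f L) \<in> verts q" using tr_in_verts[OF x P(1)] by (simp add: L_def)
  have og: "on_geo (L, tr f L) xi" unfolding on_geo_iff[OF vL] using P(2) by (auto simp: tr_def L_def)
  show ?thesis unfolding meet_end_def L_def[symmetric]
  proof (rule the_equality)
    show "on_geo (L, tr f L) xi \<and> is_anc (L, tr f L) (h, f) \<and>
      (\<forall>w. on_geo w xi \<and> is_anc w (h, f) \<longrightarrow> hor w \<le> hor (L, tr f L))"
    proof (intro conjI allI impI)
      show "on_geo (L, tr f L) xi" by (rule og)
      show "is_anc (L, tr f L) (h, f)" using P(1) by (auto simp: is_anc_iff[OF x] L_def)
      fix w assume w: "on_geo w xi \<and> is_anc w (h, f)"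
      then have "fst w \<le> h" "snd w = tr f (fst w)" by (auto simp: is_anc_iff[OF x])
      with w have "\<forall>n<fst w. f n = xi n" by (auto simp: on_geo_def geo_def tr_def fun_eq_iff) (metis)
      then show "hor w \<le> hor (L, tr f L)" using P(3) \<open>fst w \<le> h\<close> by (simp add: hor_def L_def)
    qed
    fix z assume z: "on_geo z xi \<and> is_anc z (h, f) \<and> (\<forall>w. on_geo w xi \<and> is_anc w (h, f) \<longrightarrow> hor w \<le> hor z)"
    then have "fst z \<le> h" "snd z = tr f (fst z)" by (auto simp: is_anc_iff[OF x])
    with z have "\<forall>n<fst z. f n = xi n" by (auto simp: on_geo_def geo_def tr_def fun_eq_iff) (metis)
    then have le1: "fst z \<le> L" using P(3) \<open>fst z \<le> h\<close> by (simp add: L_def)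
    have "is_anc (L, tr f L) (h, f)" using P(1) by (auto simp: is_anc_iff[OF x] L_def)
    then have "L \<le> fst z" using z og by (auto simp: hor_def)
    then show "z = (L, tr f L)" using le1 \<open>snd z = tr f (fst z)\<close> by (cases z) auto
  qed
qed

lemma up_end_eq:
  assumes "(h, f) \<in> verts q" "xi \<in> ends q"
  shows "up_end (h, f) xi = nat (h - ml h f xi)"
  by (simp add: up_end_def meet_end_eq[OF assms] hor_def)


lemma fst_funpow_pred: "fst ((pred ^^ n) x) = fst x - int n"
  by (induction n) (auto simp: pred_def)

lemma geo_eq: "geo xi h = (h, tr xi h)"
  by (simp add: geo_def tr_def)

lemma root_in_verts: "0 < q \<Longrightarrow> root \<in> verts q"
  by (auto simp: root_def verts_def)

lemma verts_q: "x \<in> verts q \<Longrightarrow> 0 < q"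
  by (cases x) (auto simp: verts_def intro: gr0I)

lemma ends_q: "xi \<in> ends q \<Longrightarrow> 0 < q"
  by (auto simp: ends_def intro: gr0I)

lemma Aff_verts: "g \<in> Aff q \<Longrightarrow> x \<in> verts q \<Longrightarrow> g x \<in> verts q"
  by (auto simp: Aff_def bij_betw_def)

lemma Aff_inj: "g \<in> Aff q \<Longrightarrow> x \<in> verts q \<Longrightarrow> y \<in> verts q \<Longrightarrow> g x = g y \<Longrightarrow> x = y"
  by (auto simp: Aff_def bij_betw_def inj_on_def)

lemma Aff_surj: "g \<in> Aff q \<Longrightarrow> y \<in> verts q \<Longrightarrow> \<exists>x\<in>verts q. g x = y"
  unfolding Aff_def bij_betw_def by (metis (mono_tags, lifting) imageE mem_Collect_eq)

lemma Aff_pred: "g \<in> Aff q \<Longrightarrow> x \<in> verts q \<Longrightarrow> g (pred x) = pred (g x)"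
  by (auto simp: Aff_def)

lemma Aff_funpow: "g \<in> Aff q \<Longrightarrow> x \<in> verts q \<Longrightarrow> g ((pred ^^ n) x) = (pred ^^ n) (g x)"
proof (induction n)
  case 0 then show ?case by simp
next
  case (Suc n)
  have "g ((pred ^^ Suc n) x) = g (pred ((pred ^^ n) x))" by simp
  also have "\<dots> = pred (g ((pred ^^ n) x))" using Suc by (intro Aff_pred funpow_pred_verts) auto
  finally show ?case using Suc by simp
qed

lemma is_anc_verts: "is_anc z x \<Longrightarrow> x \<in> verts q \<Longrightarrow> z \<in> verts q"
  by (auto simp: is_anc_def funpow_pred_verts)

lemma Aff_hor: assumes g: "g \<in> Aff q" and x: "x \<in> verts q"
  shows "hor (g x) = hor x + fst (g root)"
proof -
  obtain h f where xe: "x = (h, f)" by (cases x)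
  have xv: "(h, f) \<in> verts q" using x xe by simp
  have q0: "0 < q" using verts_q[OF x] .
  note root_in_verts = root_in_verts[OF q0]
  obtain m where m: "\<forall>n<m. f n = 0" using verts_low[OF xv] by blast
  have m0: "\<forall>n<0. (\<lambda>_. 0::nat) n = 0" by simp
  define L where "L = ml (min h 0) f (\<lambda>_. 0)"
  note P = ml_props[OF m m0, where H="min h 0"]
  have Lh: "L \<le> h" "L \<le> 0" using P(1) by (auto simp: L_def)
  have z1: "(pred ^^ nat (h - L)) (h, f) = (L, tr f L)" using funpow_pred[OF xv] Lh by simp
  have trz: "tr f L = (\<lambda>_. 0)" using P(2) by (auto simp: tr_def L_def)
  have z2: "(pred ^^ nat (0 - L)) root = (L, tr f L)" using funpow_pred[OF root_in_verts[unfolded root_def]] Lh trz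
    by (simp add: root_def tr_def fun_eq_iff)
  have "g (L, tr f L) = (pred ^^ nat (h - L)) (g x)" using Aff_funpow[OF g x, of "nat (h - L)"] z1 xe by metis
  then have a: "fst (g (L, tr f L)) = fst (g x) - (h - L)" using Lh by (simp add: fst_funpow_pred)
  have "g (L, tr f L) = (pred ^^ nat (0 - L)) (g root)" using Aff_funpow[OF g root_in_verts, of "nat (0 - L)"] z2 by metis
  then have b: "fst (g (L, tr f L)) = fst (g root) - (0 - L)" using Lh by (simp add: fst_funpow_pred)
  show ?thesis using a b xe by (simp add: hor_def)
qed

lemma is_anc_Aff:
  assumes g: "g \<in> Aff q" and x: "x \<in> verts q" and z: "z \<in> verts q"
  shows "is_anc (g z) (g x) \<longleftrightarrow> is_anc z x"
proof
  assume "is_anc z x"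
  then obtain n where "(pred ^^ n) x = z" by (auto simp: is_anc_def)
  then have "(pred ^^ n) (g x) = g z" using Aff_funpow[OF g x, of n] by metis
  then show "is_anc (g z) (g x)" by (auto simp: is_anc_def)
next
  assume "is_anc (g z) (g x)"
  then obtain n where "(pred ^^ n) (g x) = g z" by (auto simp: is_anc_def)
  then have "g ((pred ^^ n) x) = g z" using Aff_funpow[OF g x] by simp
  then have "(pred ^^ n) x = z" using Aff_inj[OF g funpow_pred_verts[OF x] z] by simp
  then show "is_anc z x" by (auto simp: is_anc_def)
qed

lemma anc_unique: "is_anc z x \<Longrightarrow> is_anc z' x \<Longrightarrow> x \<in> verts q \<Longrightarrow> hor z = hor z' \<Longrightarrow> z = z'"
  by (cases x) (auto simp: is_anc_iff hor_def prod_eq_iff)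

lemma meet_unique:
  assumes x: "x \<in> verts q" and y: "y \<in> verts q"
    and z: "is_anc z x" "is_anc z y" "\<forall>w. is_anc w x \<and> is_anc w y \<longrightarrow> hor w \<le> hor z"
  shows "meet x y = z"
  unfolding meet_def
proof (rule the_equality)
  show "is_anc z x \<and> is_anc z y \<and> (\<forall>w. is_anc w x \<and> is_anc w y \<longrightarrow> hor w \<le> hor z)" using z by blast
  fix z' assume z': "is_anc z' x \<and> is_anc z' y \<and> (\<forall>w. is_anc w x \<and> is_anc w y \<longrightarrow> hor w \<le> hor z')"
  then have "hor z' = hor z" using z by (meson order.antisym)
  then show "z' = z" using anc_unique[OF _ _ x] z z' by blast
qed

lemma meet_props:
  assumes x: "x \<in> verts q" and y: "y \<in> verts q"
  shows "is_anc (meet x y) x" "is_anc (meet x y) y" "\<forall>w. is_anc w x \<and> is_anc w y \<longrightarrow> hor w \<le> hor (meet x y)"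
proof -
  obtain h1 f1 h2 f2 where e: "x = (h1, f1)" "y = (h2, f2)" by (cases x, cases y)
  have xv: "(h1, f1) \<in> verts q" and yv: "(h2, f2) \<in> verts q" using x y e by auto
  obtain m1 m2 where m: "\<forall>n<m1. f1 n = 0" "\<forall>n<m2. f2 n = 0" using verts_low[OF xv] verts_low[OF yv] by blast
  note P = ml_props[OF m, where H="min h1 h2"]
  define L where "L = ml (min h1 h2) f1 f2"
  have trL: "tr f2 L = tr f1 L" using P(2) by (auto simp: tr_def L_def)
  show "is_anc (meet x y) x" "is_anc (meet x y) y"
    using P(1) trL by (auto simp: e meet_eq[OF xv yv] is_anc_iff[OF xv] is_anc_iff[OF yv] L_def)
  show "\<forall>w. is_anc w x \<and> is_anc w y \<longrightarrow> hor w \<le> hor (meet x y)"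
  proof (intro allI impI)
    fix w assume "is_anc w x \<and> is_anc w y"
    then have "fst w \<le> min h1 h2" "snd w = tr f1 (fst w)" "snd w = tr f2 (fst w)"
      by (auto simp: e is_anc_iff[OF xv] is_anc_iff[OF yv])
    then have "\<forall>n<fst w. f1 n = f2 n" by (metis tr_def)
    then show "hor w \<le> hor (meet x y)" using P(3) \<open>fst w \<le> min h1 h2\<close>
      by (simp add: hor_def e meet_eq[OF xv yv])
  qed
qed

lemma meet_Aff:
  assumes g: "g \<in> Aff q" and x: "x \<in> verts q" and y: "y \<in> verts q"
  shows "meet (g x) (g y) = g (meet x y)"
proof (rule meet_unique[OF Aff_verts[OF g x] Aff_verts[OF g y]])
  note M = meet_props[OF x y]
  have mv: "meet x y \<in> verts q" using is_anc_verts[OF M(1) x] .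
  show "is_anc (g (meet x y)) (g x)" "is_anc (g (meet x y)) (g y)"
    using M is_anc_Aff[OF g x mv] is_anc_Aff[OF g y mv] by auto
  show "\<forall>w. is_anc w (g x) \<and> is_anc w (g y) \<longrightarrow> hor w \<le> hor (g (meet x y))"
  proof (intro allI impI)
    fix w assume w: "is_anc w (g x) \<and> is_anc w (g y)"
    then have wv: "w \<in> verts q" using is_anc_verts Aff_verts[OF g x] by blast
    obtain w' where w': "w' \<in> verts q" "g w' = w" using Aff_surj[OF g wv] by blast
    have "is_anc w' x" "is_anc w' y" using w w' is_anc_Aff[OF g x w'(1)] is_anc_Aff[OF g y w'(1)] by auto
    then have "hor w' \<le> hor (meet x y)" using M(3) by blast
    then show "hor w \<le> hor (g (meet x y))" using Aff_hor[OF g w'(1)] Aff_hor[OF g mv] w' by simp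
  qed
qed

lemma up_Aff:
  assumes g: "g \<in> Aff q" and x: "x \<in> verts q" and y: "y \<in> verts q"
  shows "up (g x) (g y) = up x y"
proof -
  have mv: "meet x y \<in> verts q" using is_anc_verts[OF meet_props(1)[OF x y] x] .
  show ?thesis unfolding up_def meet_Aff[OF assms] using Aff_hor[OF g x] Aff_hor[OF g mv] by simp
qed

lemma on_geo_verts: "on_geo x xi \<Longrightarrow> xi \<in> ends q \<Longrightarrow> x \<in> verts q"
  by (auto simp: on_geo_def geo_in_verts)

lemma geo_unique: "on_geo z xi \<Longrightarrow> on_geo z' xi \<Longrightarrow> hor z = hor z' \<Longrightarrow> z = z'"
  by (auto simp: on_geo_def geo_def hor_def)

lemma meet_end_unique:
  assumes x: "x \<in> verts q"
    and z: "on_geo z xi" "is_anc z x" "\<forall>w. on_geo w xi \<and> is_anc w x \<longrightarrow> hor w \<le> hor z"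
  shows "meet_end x xi = z"
  unfolding meet_end_def
proof (rule the_equality)
  show "on_geo z xi \<and> is_anc z x \<and> (\<forall>w. on_geo w xi \<and> is_anc w x \<longrightarrow> hor w \<le> hor z)" using z by blast
  fix z' assume z': "on_geo z' xi \<and> is_anc z' x \<and> (\<forall>w. on_geo w xi \<and> is_anc w x \<longrightarrow> hor w \<le> hor z')"
  then have "hor z' = hor z" using z by (meson order.antisym)
  then show "z' = z" using anc_unique[OF _ _ x] z z' by blast
qed

lemma meet_end_props:
  assumes x: "x \<in> verts q" and xi: "xi \<in> ends q"
  shows "on_geo (meet_end x xi) xi" "is_anc (meet_end x xi) x"
    "\<forall>w. on_geo w xi \<and> is_anc w x \<longrightarrow> hor w \<le> hor (meet_end x xi)"
proof -
  obtain h f where e: "x = (h, f)" by (cases x)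
  have xv: "(h, f) \<in> verts q" using x e by auto
  obtain m1 m2 where m: "\<forall>n<m1. f n = 0" "\<forall>n<m2. xi n = 0" using verts_low[OF xv] ends_low[OF xi] by blast
  note P = ml_props[OF m, where H=h]
  define L where "L = ml h f xi"
  have vL: "(L, tr f L) \<in> verts q" using tr_in_verts[OF xv P(1)] by (simp add: L_def)
  show "on_geo (meet_end x xi) xi" unfolding e meet_end_eq[OF xv xi] L_def[symmetric]
    unfolding on_geo_iff[OF vL] using P(2) by (auto simp: tr_def L_def)
  show "is_anc (meet_end x xi) x" using P(1) by (auto simp: e meet_end_eq[OF xv xi] is_anc_iff[OF xv])
  show "\<forall>w. on_geo w xi \<and> is_anc w x \<longrightarrow> hor w \<le> hor (meet_end x xi)"
  proof (intro allI impI)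
    fix w assume w: "on_geo w xi \<and> is_anc w x"
    then have "fst w \<le> h" "snd w = tr f (fst w)" by (auto simp: e is_anc_iff[OF xv])
    with w have "\<forall>n<fst w. f n = xi n" by (auto simp: on_geo_def geo_def tr_def fun_eq_iff) (metis)
    then show "hor w \<le> hor (meet_end x xi)" using P(3) \<open>fst w \<le> h\<close>
      by (simp add: hor_def e meet_end_eq[OF xv xi])
  qed
qed

definition endimg :: "(vtx \<Rightarrow> vtx) \<Rightarrow> bend \<Rightarrow> bend" where
  "endimg g xi = (\<lambda>k. snd (g (geo xi (k + 1 - fst (g root)))) k)"

lemma endimg_props:
  assumes g: "g \<in> Aff q" and xi: "xi \<in> ends q"
  shows "endimg g xi \<in> ends q" "\<forall>x\<in>verts q. on_geo x xi \<longrightarrow> on_geo (g x) (endimg g xi)"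
proof -
  define c where "c = fst (g root)"
  define G where "G h = snd (g (geo xi h))" for h
  have gv: "g (geo xi h) \<in> verts q" for h using Aff_verts[OF g geo_in_verts[OF xi]] .
  have fg: "fst (g (geo xi h)) = h + c" for h using Aff_hor[OF g geo_in_verts[OF xi]] by (simp add: hor_def geo_def c_def)
  have gG: "g (geo xi h) = (h + c, G h)" for h using fg by (simp add: G_def prod_eq_iff)
  have chain: "G h = tr (G (h + int n)) (h + c)" for h n
  proof -
    have "(pred ^^ n) (geo xi (h + int n)) = geo xi h"
      using funpow_pred[of "h + int n" "tr xi (h + int n)" q] geo_in_verts[OF xi, of "h + int n"]
      by (simp add: geo_eq tr_tr)
    then have "g (geo xi h) = (pred ^^ n) (g (geo xi (h + int n)))"
      using Aff_funpow[OF g geo_in_verts[OF xi]] by metis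
    also have "\<dots> = (h + c, tr (G (h + int n)) (h + c))"
      using funpow_pred[of "h + int n + c" "G (h + int n)" q n] gv[of "h + int n"] gG[of "h + int n"] by simp
    finally show ?thesis using gG by simp
  qed
  have eta: "endimg g xi = (\<lambda>k. G (k + 1 - c) k)" by (simp add: endimg_def G_def c_def)
  have key: "G h k = endimg g xi k" if "k < h + c" for h k
  proof -
    have "G (k + 1 - c) = tr (G h) (k + 1)" using chain[of "k + 1 - c" "nat (h - (k + 1 - c))"] that by simp
    then show ?thesis by (simp add: eta tr_def)
  qed
  have Gv: "(h + c, G h) \<in> verts q" for h using gv gG by metis
  show "endimg g xi \<in> ends q"
  proof -
    obtain m where m: "\<forall>n<m. G 0 n = 0" using verts_low[OF Gv[of 0]] by blast
    have "\<forall>n<min m c. endimg g xi n = 0" using key[of _ 0] m by (metis add_0 min_less_iff_conj)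
    moreover have "\<forall>n. endimg g xi n < q" using Gv by (auto simp: eta verts_def)
    ultimately show ?thesis unfolding ends_def by (auto intro!: exI[of _ "min m c"])
  qed
  show "\<forall>x\<in>verts q. on_geo x xi \<longrightarrow> on_geo (g x) (endimg g xi)"
  proof (intro ballI impI)
    fix x assume "x \<in> verts q" "on_geo x xi"
    then obtain h where "x = geo xi h" by (auto simp: on_geo_def)
    then show "on_geo (g x) (endimg g xi)" using key[of _ h] by (simp add: gG on_geo_iff[OF Gv])
  qed
qed

lemma endimg_unique:
  assumes g: "g \<in> Aff q" and xi: "xi \<in> ends q" and eta: "eta \<in> ends q"
    and P: "\<forall>x\<in>verts q. on_geo x xi \<longrightarrow> on_geo (g x) eta"
  shows "eta = endimg g xi"
proof
  fix k
  define c where "c = fst (g root)"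
  define v where "v = g (geo xi (k + 1 - c))"
  have vv: "v \<in> verts q" using Aff_verts[OF g geo_in_verts[OF xi]] by (simp add: v_def)
  have fv: "fst v = k + 1" using Aff_hor[OF g geo_in_verts[OF xi]] by (simp add: v_def hor_def geo_def c_def)
  have "on_geo (geo xi (k + 1 - c)) xi" by (auto simp: on_geo_def)
  then have "on_geo v eta" "on_geo v (endimg g xi)" using P endimg_props[OF g xi] geo_in_verts[OF xi]
    by (auto simp: v_def)
  then show "eta k = endimg g xi k" using vv fv
    by (cases v) (simp add: on_geo_iff)
qed

lemma act_end_eq: "g \<in> Aff q \<Longrightarrow> xi \<in> ends q \<Longrightarrow> act_end q g xi = endimg g xi"
  unfolding act_end_def
proof (rule the_equality)
  assume g: "g \<in> Aff q" and xi: "xi \<in> ends q"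
  show "endimg g xi \<in> ends q \<and> (\<forall>x\<in>verts q. on_geo x xi \<longrightarrow> on_geo (g x) (endimg g xi))"
    using endimg_props[OF g xi] by blast
  fix eta assume "eta \<in> ends q \<and> (\<forall>x\<in>verts q. on_geo x xi \<longrightarrow> on_geo (g x) eta)"
  then show "eta = endimg g xi" using endimg_unique[OF g xi] by blast
qed

lemma act_end_props:
  assumes g: "g \<in> Aff q" and xi: "xi \<in> ends q"
  shows "act_end q g xi \<in> ends q" "\<forall>x\<in>verts q. on_geo x xi \<longrightarrow> on_geo (g x) (act_end q g xi)"
  using endimg_props[OF assms] act_end_eq[OF assms] by auto

lemma act_end_unique:
  assumes g: "g \<in> Aff q" and xi: "xi \<in> ends q" and eta: "eta \<in> ends q"
    and P: "\<forall>x\<in>verts q. on_geo x xi \<longrightarrow> on_geo (g x) eta"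
  shows "act_end q g xi = eta"
  using endimg_unique[OF assms] act_end_eq[OF g xi] by simp

lemma up_end_Aff:
  assumes g: "g \<in> Aff q" and x: "x \<in> verts q" and xi: "xi \<in> ends q"
  shows "up_end (g x) (act_end q g xi) = up_end x xi"
proof -
  define eta where "eta = act_end q g xi"
  have eta: "eta \<in> ends q" "\<forall>x\<in>verts q. on_geo x xi \<longrightarrow> on_geo (g x) eta"
    using act_end_props[OF g xi] by (auto simp: eta_def)
  note M = meet_end_props[OF x xi]
  have mv: "meet_end x xi \<in> verts q" using is_anc_verts[OF M(2) x] .
  have "meet_end (g x) eta = g (meet_end x xi)"
  proof (rule meet_end_unique[OF Aff_verts[OF g x]])
    show "on_geo (g (meet_end x xi)) eta" using eta M mv by blast
    show "is_anc (g (meet_end x xi)) (g x)" using M is_anc_Aff[OF g x mv] by auto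
    show "\<forall>w. on_geo w eta \<and> is_anc w (g x) \<longrightarrow> hor w \<le> hor (g (meet_end x xi))"
    proof (intro allI impI)
      fix w assume w: "on_geo w eta \<and> is_anc w (g x)"
      then have wv: "w \<in> verts q" using is_anc_verts Aff_verts[OF g x] by blast
      obtain w' where w': "w' \<in> verts q" "g w' = w" using Aff_surj[OF g wv] by blast
      have aw: "is_anc w' x" using w w' is_anc_Aff[OF g x w'(1)] by auto
      define v where "v = geo xi (hor w')"
      have vv: "v \<in> verts q" using geo_in_verts[OF xi] by (simp add: v_def)
      have "on_geo v xi" by (auto simp: v_def on_geo_def)
      then have "on_geo (g v) eta" using eta vv by blast
      moreover have "hor (g v) = hor w" using Aff_hor[OF g vv] Aff_hor[OF g w'(1)] w'
        by (simp add: v_def hor_def geo_def)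
      ultimately have "g v = w" using geo_unique w by blast
      then have "v = w'" using Aff_inj[OF g vv w'(1)] w' by simp
      then have "on_geo w' xi" unfolding v_def on_geo_def by metis
      then have "hor w' \<le> hor (meet_end x xi)" using M(3) aw by blast
      then show "hor w \<le> hor (g (meet_end x xi))" using Aff_hor[OF g w'(1)] Aff_hor[OF g mv] w' by simp
    qed
  qed
  then show ?thesis unfolding up_end_def eta_def[symmetric]
    using Aff_hor[OF g x] Aff_hor[OF g mv] by simp
qed

lemma Aff_comp:
  assumes "g1 \<in> Aff q" "g2 \<in> Aff q" shows "g1 \<circ> g2 \<in> Aff q"
proof -
  have b: "bij_betw (g1 \<circ> g2) (verts q) (verts q)"
    using assms unfolding Aff_def by (auto intro: bij_betw_trans)
  have p: "\<forall>x\<in>verts q. (g1 \<circ> g2) (pred x) = pred ((g1 \<circ> g2) x)"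
  proof
    fix x assume x: "x \<in> verts q"
    have "g1 (g2 (pred x)) = g1 (pred (g2 x))" using Aff_pred[OF assms(2) x] by simp
    also have "\<dots> = pred (g1 (g2 x))" using Aff_pred[OF assms(1) Aff_verts[OF assms(2) x]] .
    finally show "(g1 \<circ> g2) (pred x) = pred ((g1 \<circ> g2) x)" by simp
  qed
  have i: "\<forall>x. x \<notin> verts q \<longrightarrow> (g1 \<circ> g2) x = x"
    using assms unfolding Aff_def by auto
  show ?thesis using b p i unfolding Aff_def by blast
qed

lemma act_end_comp:
  assumes g1: "g1 \<in> Aff q" and g2: "g2 \<in> Aff q" and xi: "xi \<in> ends q"
  shows "act_end q (g1 \<circ> g2) xi = act_end q g1 (act_end q g2 xi)"
proof (rule act_end_unique[OF Aff_comp[OF g1 g2] xi])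
  have e2: "act_end q g2 xi \<in> ends q" using act_end_props[OF g2 xi] by blast
  show "act_end q g1 (act_end q g2 xi) \<in> ends q" using act_end_props[OF g1 e2] by blast
  show "\<forall>x\<in>verts q. on_geo x xi \<longrightarrow> on_geo ((g1 \<circ> g2) x) (act_end q g1 (act_end q g2 xi))"
    using act_end_props[OF g2 xi] act_end_props[OF g1 e2] Aff_verts[OF g2] by auto
qed


lemma nn_integral_invol_le:
  assumes L: "L \<in> measurable M M" and inv: "\<forall>x\<in>space M. L (L x) = x"
    and pres: "\<forall>A\<in>sets M. emeasure M (L -` A \<inter> space M) = emeasure M A"
  shows "(\<integral>\<^sup>+x. f (L x) \<partial>M) \<le> integral\<^sup>N M f"
  unfolding nn_integral_def
proof (rule SUP_least)
  fix g assume g: "g \<in> {g. simple_function M g \<and> g \<le> (\<lambda>x. f (L x))}"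
  define g' where "g' x = (if x \<in> space M then g (L x) else 0)" for x
  have Ls: "L x \<in> space M" if "x \<in> space M" for x using L that by (auto simp: measurable_def)
  have sg: "simple_function M g" using g by auto
  have sgL: "simple_function M (\<lambda>x. g (L x))" using simple_function_comp[OF L sg] .
  have sg': "simple_function M g'" using sgL by (subst simple_function_cong[of _ g' "\<lambda>x. g (L x)"]) (auto simp: g'_def)
  have le: "g' \<le> f"
  proof (rule le_funI)
    fix x show "g' x \<le> f x"
    proof (cases "x \<in> space M")
      case True
      then have "g (L x) \<le> f (L (L x))" using g by (auto simp: le_fun_def)
      then show ?thesis using True inv by (simp add: g'_def)
    qed (simp add: g'_def)
  qed
  have img: "(\<lambda>x. g (L x)) ` space M = g ` space M"
  proof
    show "(\<lambda>x. g (L x)) ` space M \<subseteq> g ` space M" using Ls by auto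
    show "g ` space M \<subseteq> (\<lambda>x. g (L x)) ` space M"
    proof
      fix y assume "y \<in> g ` space M"
      then obtain x where x: "x \<in> space M" "y = g x" by auto
      then have "y = g (L (L x))" using inv by simp
      then show "y \<in> (\<lambda>x. g (L x)) ` space M" using Ls[OF x(1)] by blast
    qed
  qed
  have pre: "emeasure M ((\<lambda>x. g (L x)) -` {y} \<inter> space M) = emeasure M (g -` {y} \<inter> space M)" for y
  proof -
    have "(\<lambda>x. g (L x)) -` {y} \<inter> space M = L -` (g -` {y} \<inter> space M) \<inter> space M" using Ls by auto
    moreover have "g -` {y} \<inter> space M \<in> sets M" using sg by (rule simple_functionD(2))
    then have "emeasure M (L -` (g -` {y} \<inter> space M) \<inter> space M) = emeasure M (g -` {y} \<inter> space M)"
      using pres by blast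
    ultimately show ?thesis by simp
  qed
  have "integral\<^sup>S M g' = integral\<^sup>S M (\<lambda>x. g (L x))" by (rule simple_integral_cong) (simp add: g'_def)
  also have "\<dots> = integral\<^sup>S M g" unfolding simple_integral_def img pre ..
  finally have "integral\<^sup>S M g = integral\<^sup>S M g'" by simp
  moreover have "g' \<in> {g. simple_function M g \<and> g \<le> f}" using sg' le by simp
  ultimately show "integral\<^sup>S M g \<le> (SUP g\<in>{g. simple_function M g \<and> g \<le> f}. integral\<^sup>S M g)"
    by (metis SUP_upper)
qed

lemma nn_integral_invol:
  assumes L: "L \<in> measurable M M" and inv: "\<forall>x\<in>space M. L (L x) = x"
    and pres: "\<forall>A\<in>sets M. emeasure M (L -` A \<inter> space M) = emeasure M A"
  shows "(\<integral>\<^sup>+x. f (L x) \<partial>M) = integral\<^sup>N M f"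
proof (rule antisym)
  show "(\<integral>\<^sup>+x. f (L x) \<partial>M) \<le> integral\<^sup>N M f" by (rule nn_integral_invol_le[OF assms])
  have "integral\<^sup>N M f = (\<integral>\<^sup>+x. f (L (L x)) \<partial>M)" using inv by (intro nn_integral_cong) simp
  also have "\<dots> \<le> (\<integral>\<^sup>+x. f (L x) \<partial>M)" by (rule nn_integral_invol_le[OF assms])
  finally show "integral\<^sup>N M f \<le> (\<integral>\<^sup>+x. f (L x) \<partial>M)" .
qed

lemma measurable_borel_sets_of:
  assumes "continuous_map T T f" "sets M = borel_sets_of T" "space M = topspace T"
  shows "f \<in> measurable M M"
proof (rule measurable_sigma_sets[of M "topspace T" "{U. openin T U}"])
  show "sets M = sigma_sets (topspace T) {U. openin T U}" using assms by (simp add: borel_sets_of_def)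
  show "{U. openin T U} \<subseteq> Pow (topspace T)" by (auto dest: openin_subset)
  show "f \<in> space M \<rightarrow> topspace T" using assms(1,3) by (auto simp: continuous_map_def)
  fix U assume "U \<in> {U. openin T U}"
  moreover have "{x \<in> topspace T. f x \<in> U} = f -` U \<inter> topspace T" by auto
  ultimately have "openin T (f -` U \<inter> topspace T)" using assms(1) openin_continuous_map_preimage by fastforce
  then show "f -` U \<inter> space M \<in> sets M" using assms(2,3) by (simp add: borel_sets_of_def sigma_sets.Basic)
qed

lemma open_in_borel: "openin T U \<Longrightarrow> U \<in> borel_sets_of T"
  by (simp add: borel_sets_of_def sigma_sets.Basic)

definition cyl :: "nat \<Rightarrow> vtx \<Rightarrow> bend set" where
  "cyl q x = {xi \<in> ends q. on_geo x xi}"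

lemma cyl_open: "x \<in> verts q \<Longrightarrow> openin (end_top q) (cyl q x)"
  unfolding end_top_def cyl_def by (rule topology_generated_by_Basis) blast

lemma cyl_sets: "radon_on_ends q nu \<Longrightarrow> x \<in> verts q \<Longrightarrow> cyl q x \<in> sets nu"
  using open_in_borel[OF cyl_open] by (simp add: radon_on_ends_def)

lemma cyl_iff: "(h, f) \<in> verts q \<Longrightarrow> xi \<in> cyl q (h, f) \<longleftrightarrow> xi \<in> ends q \<and> (\<forall>n<h. xi n = f n)"
  by (simp add: cyl_def on_geo_iff)

definition sw :: "nat \<Rightarrow> nat \<Rightarrow> nat \<Rightarrow> nat" where
  "sw a b d = (if d = a then b else if d = b then a else d)"

lemma sw_sw[simp]: "sw a b (sw a b d) = d"
  by (simp add: sw_def)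

lemma sw_lt: "a < q \<Longrightarrow> b < q \<Longrightarrow> d < q \<Longrightarrow> sw a b d < q"
  by (simp add: sw_def)

definition passes :: "vtx \<Rightarrow> vtx \<Rightarrow> bool" where
  "passes w x \<longleftrightarrow> fst x > fst w \<and> (\<forall>n<fst w. snd x n = snd w n)"

definition tau :: "nat \<Rightarrow> vtx \<Rightarrow> nat \<Rightarrow> nat \<Rightarrow> vtx \<Rightarrow> vtx" where
  "tau q w a b x = (if x \<in> verts q \<and> passes w x then (fst x, (snd x)(fst w := sw a b (snd x (fst w)))) else x)"

definition tauE :: "vtx \<Rightarrow> nat \<Rightarrow> nat \<Rightarrow> bend \<Rightarrow> bend" where
  "tauE w a b xi = (if (\<forall>n<fst w. xi n = snd w n) then xi(fst w := sw a b (xi (fst w))) else xi)"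

context
  fixes q :: nat and w :: vtx and a b :: nat
  assumes ab: "a < q" "b < q"
begin

lemma tau_verts: "x \<in> verts q \<Longrightarrow> tau q w a b x \<in> verts q"
proof -
  assume x: "x \<in> verts q"
  obtain h f where e: "x = (h, f)" by (cases x)
  obtain m where m: "\<forall>n<m. f n = 0" using verts_low x e by blast
  show ?thesis
  proof (cases "passes w x")
    case True
    then have "fst w < h" by (simp add: passes_def e)
    then show ?thesis using x m ab True unfolding tau_def e verts_def
      by (auto intro!: exI[of _ "min m (fst w)"] sw_lt)
  qed (use x in \<open>simp add: tau_def\<close>)
qed

lemma passes_tau: "passes w (tau q w a b x) \<longleftrightarrow> passes w x"
  by (auto simp: tau_def passes_def)

lemma tau_tau: "tau q w a b (tau q w a b x) = x"
proof (cases "x \<in> verts q \<and> passes w x")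
  case True
  then have "tau q w a b x \<in> verts q" "passes w (tau q w a b x)" using tau_verts passes_tau by auto
  then show ?thesis using True by (simp add: tau_def fun_eq_iff)
next
  case False
  then have "tau q w a b x = x" unfolding tau_def by presburger
  then show ?thesis by simp
qed

lemma tau_pred: "x \<in> verts q \<Longrightarrow> tau q w a b (pred x) = pred (tau q w a b x)"
proof -
  assume x: "x \<in> verts q"
  obtain h f where e: "x = (h, f)" by (cases x)
  have px: "pred x \<in> verts q" using pred_in_verts[OF x] .
  show ?thesis
  proof (cases "passes w x")
    case True
    show ?thesis
    proof (cases "h - 1 > fst w")
      case True
      then have "passes w (pred x)" using \<open>passes w x\<close> by (auto simp: passes_def pred_def e)
      then show ?thesis using True \<open>passes w x\<close> x px by (auto simp: tau_def pred_def e fun_eq_iff)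
    next
      case False
      then have "h - 1 = fst w" "\<not> passes w (pred x)" using \<open>passes w x\<close> by (auto simp: passes_def pred_def e)
      then show ?thesis using \<open>passes w x\<close> x px by (auto simp: tau_def pred_def e fun_eq_iff)
    qed
  next
    case False
    have "\<not> passes w (pred x)"
    proof
      assume pp: "passes w (pred x)"
      then have "h - 1 > fst w" "\<forall>n<fst w. (f(h - 1 := 0)) n = snd w n" by (auto simp: passes_def pred_def e)
      then have "\<forall>n<fst w. f n = snd w n" by (metis fun_upd_other less_trans order.irrefl)
      then have "passes w x" using \<open>h - 1 > fst w\<close> by (auto simp: passes_def e)
      then show False using False by simp
    qed
    then show ?thesis using False by (simp add: tau_def)
  qed
qed

lemma tau_Aff: "tau q w a b \<in> Aff q"
  unfolding Aff_def
proof (intro CollectI conjI ballI allI impI)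
  show "bij_betw (tau q w a b) (verts q) (verts q)"
    by (rule bij_betw_byWitness[where f'="tau q w a b"]) (auto simp: tau_tau tau_verts)
  show "\<And>x. x \<in> verts q \<Longrightarrow> tau q w a b (pred x) = pred (tau q w a b x)" by (rule tau_pred)
  show "\<And>x. x \<notin> verts q \<Longrightarrow> tau q w a b x = x" by (simp add: tau_def)
qed

lemma tauE_ends: "xi \<in> ends q \<Longrightarrow> tauE w a b xi \<in> ends q"
proof -
  assume xi: "xi \<in> ends q"
  obtain m where m: "\<forall>n<m. xi n = 0" using ends_low xi by blast
  show ?thesis using xi m ab unfolding tauE_def ends_def
    by (auto intro!: exI[of _ "min m (fst w)"] sw_lt)
qed

lemma act_tau: assumes xi: "xi \<in> ends q" shows "act_end q (tau q w a b) xi = tauE w a b xi"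
proof (rule act_end_unique[OF tau_Aff xi tauE_ends[OF xi]])
  show "\<forall>x\<in>verts q. on_geo x xi \<longrightarrow> on_geo (tau q w a b x) (tauE w a b xi)"
  proof (intro ballI impI)
    fix x assume x: "x \<in> verts q" and og: "on_geo x xi"
    obtain h f where e: "x = (h, f)" by (cases x)
    have xv: "(h, f) \<in> verts q" using x e by simp
    have agr: "\<forall>n<h. xi n = f n" using og on_geo_iff[OF xv] e by simp
    have tv: "tau q w a b (h, f) \<in> verts q" using tau_verts xv by blast
    show "on_geo (tau q w a b x) (tauE w a b xi)"
    proof (cases "passes w x")
      case True
      then have "fst w < h" "\<forall>n<fst w. f n = snd w n" by (auto simp: passes_def e)
      then have aw: "\<forall>n<fst w. xi n = snd w n" using agr by auto
      have tx: "tau q w a b x = (h, f(fst w := sw a b (f (fst w))))" using True x e by (simp add: tau_def)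
      have tv': "(h, f(fst w := sw a b (f (fst w)))) \<in> verts q" using tv tx e by simp
      show ?thesis unfolding tx on_geo_iff[OF tv'] using aw agr \<open>fst w < h\<close> by (simp add: tauE_def)
    next
      case False
      have tx: "tau q w a b (h, f) = (h, f)" using False by (simp add: tau_def e)
      show ?thesis
      proof (cases "h \<le> fst w")
        case True
        then show ?thesis using agr tx e xv by (auto simp: on_geo_iff tauE_def)
      next
        case False
        then have "\<not> (\<forall>n<fst w. f n = snd w n)" using \<open>\<not> passes w x\<close> by (auto simp: passes_def e)
        then have "\<not> (\<forall>n<fst w. xi n = snd w n)" using agr False by auto
        then have "tauE w a b xi = xi" unfolding tauE_def by meson
        then show ?thesis using og tx e by simp
      qed
    qed
  qed
qed

end

definition child :: "vtx \<Rightarrow> nat \<Rightarrow> vtx" where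
  "child v c = (fst v + 1, (snd v)(fst v := c))"

lemma child_verts: "w \<in> verts q \<Longrightarrow> c < q \<Longrightarrow> child w c \<in> verts q"
proof -
  assume w: "w \<in> verts q" and c: "c < q"
  obtain h f where e: "w = (h, f)" by (cases w)
  obtain m where m: "\<forall>n<m. f n = 0" using verts_low w e by blast
  show ?thesis using w c m unfolding child_def e verts_def by (auto intro!: exI[of _ "min m h"])
qed

lemma cyl_child_iff:
  assumes "w \<in> verts q" "c < q"
  shows "xi \<in> cyl q (child w c) \<longleftrightarrow> xi \<in> ends q \<and> (\<forall>n<fst w. xi n = snd w n) \<and> xi (fst w) = c"
proof -
  have cv: "(fst w + 1, (snd w)(fst w := c)) \<in> verts q" using child_verts[OF assms] by (simp add: child_def)
  show ?thesis unfolding child_def cyl_iff[OF cv]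
    by (auto simp: less_le_trans)
qed

lemma tauE_cyl:
  assumes ab: "a < q" "b < q" and w: "w \<in> verts q" and xi: "xi \<in> ends q"
  shows "tauE w a b xi \<in> cyl q (child w a) \<longleftrightarrow> xi \<in> cyl q (child w b)"
  using tauE_ends[OF ab xi] xi
  unfolding cyl_child_iff[OF w ab(1)] cyl_child_iff[OF w ab(2)]
  by (auto simp: tauE_def sw_def split: if_splits)


locale setting =
  fixes q :: nat and p :: "vtx \<Rightarrow> vtx \<Rightarrow> real" and m :: "(vtx \<Rightarrow> vtx) measure" and nu :: "bend measure"
  assumes q2: "q \<ge> 2"
    and tm: "transition_matrix q p" and semi: "semi_isotropic q p"
    and haar: "is_left_haar q m"
    and radon: "radon_on_ends q nu"
    and inv: "mu_invariant q m p nu"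
begin

lemma q0: "0 < q" using q2 by simp

lemma root_v: "root \<in> verts q" using root_in_verts[OF q0] .

lemma space_m: "space m = Aff q" using haar by (simp add: is_left_haar_def)

lemma sets_m: "sets m = borel_sets_of (aff_top q)" using haar by (simp add: is_left_haar_def)

lemma topspace_aff: "topspace (aff_top q) = Aff q"
proof -
  have "\<Union>{{g \<in> Aff q. g x = y} | x y. x \<in> verts q \<and> y \<in> verts q} = Aff q"
  proof
    show "Aff q \<subseteq> \<Union>{{g \<in> Aff q. g x = y} | x y. x \<in> verts q \<and> y \<in> verts q}"
    proof
      fix g assume g: "g \<in> Aff q"
      then have "g \<in> {g' \<in> Aff q. g' root = g root}" by simp
      moreover have "g root \<in> verts q" using Aff_verts[OF g root_v] .
      ultimately show "g \<in> \<Union>{{g \<in> Aff q. g x = y} | x y. x \<in> verts q \<and> y \<in> verts q}"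
        using root_v by blast
    qed
  qed auto
  then show ?thesis by (simp add: aff_top_def)
qed

lemma nu_space: "space nu = ends q" using radon by (simp add: radon_on_ends_def)

lemma cyl_sets': "x \<in> verts q \<Longrightarrow> cyl q x \<in> sets nu"
  using cyl_sets[OF radon] .

lemma p_nonneg: "x \<in> verts q \<Longrightarrow> y \<in> verts q \<Longrightarrow> p x y \<ge> 0"
  using tm by (simp add: transition_matrix_def)

lemma left_transl:
  assumes t: "t \<in> Aff q" and tt: "\<forall>x. t (t x) = x"
  shows "(\<integral>\<^sup>+g. F (t \<circ> g) \<partial>m) = integral\<^sup>N m F"
proof (rule nn_integral_invol)
  define L :: "(vtx \<Rightarrow> vtx) \<Rightarrow> (vtx \<Rightarrow> vtx)" where "L = (\<lambda>g. t \<circ> g)"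
  have LL: "L (L g) = g" for g unfolding L_def fun_eq_iff comp_def using tt by blast
  have LA: "g \<in> Aff q \<Longrightarrow> L g \<in> Aff q" for g using Aff_comp[OF t] by (simp add: L_def)
  have cont: "continuous_map (aff_top q) (aff_top q) L"
    unfolding aff_top_def continuous_on_generated_topo_iff
  proof (intro conjI allI impI)
    fix U assume "U \<in> {{g \<in> Aff q. g x = y} | x y. x \<in> verts q \<and> y \<in> verts q}"
    then obtain x y where U: "U = {g \<in> Aff q. g x = y}" "x \<in> verts q" "y \<in> verts q" by blast
    have tyv: "t y \<in> verts q" using Aff_verts[OF t U(3)] .
    have tsp: "topspace (topology_generated_by {{g \<in> Aff q. g x = y} |x y. x \<in> verts q \<and> y \<in> verts q}) = Aff q"
      using topspace_aff by (simp add: aff_top_def)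
    have "L -` U \<inter> Aff q = {g \<in> Aff q. t (g x) = y}"
      using U(1) LA by (auto simp: L_def)
    also have "\<dots> = {g \<in> Aff q. g x = t y}"
    proof (intro Collect_cong conj_cong refl)
      fix g show "t (g x) = y \<longleftrightarrow> g x = t y" using tt by metis
    qed
    finally have "L -` U \<inter> Aff q = {g \<in> Aff q. g x = t y}" .
    then have "L -` U \<inter> Aff q \<in> {{g \<in> Aff q. g x = y} | x y. x \<in> verts q \<and> y \<in> verts q}"
      using U(2) tyv by blast
    then show "openin (topology_generated_by {{g \<in> Aff q. g x = y} |x y. x \<in> verts q \<and> y \<in> verts q})
        (L -` U \<inter> topspace (topology_generated_by {{g \<in> Aff q. g x = y} |x y. x \<in> verts q \<and> y \<in> verts q}))"
      unfolding tsp by (rule topology_generated_by_Basis)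
  next
    have tsp: "topspace (topology_generated_by {{g \<in> Aff q. g x = y} |x y. x \<in> verts q \<and> y \<in> verts q}) = Aff q"
      using topspace_aff by (simp add: aff_top_def)
    show "L ` topspace (topology_generated_by {{g \<in> Aff q. g x = y} |x y. x \<in> verts q \<and> y \<in> verts q})
      \<subseteq> \<Union> {{g \<in> Aff q. g x = y} |x y. x \<in> verts q \<and> y \<in> verts q}"
    proof -
      have u: "\<Union> {{g \<in> Aff q. g x = y} |x y. x \<in> verts q \<and> y \<in> verts q} = Aff q" using tsp by simp
      show ?thesis unfolding tsp u using LA by auto
    qed
  qed
  show "(\<lambda>g. t \<circ> g) \<in> measurable m m"
    using measurable_borel_sets_of[OF cont sets_m] space_m topspace_aff by (simp add: L_def)
  show "\<forall>x\<in>space m. t \<circ> (t \<circ> x) = x" using LL by (simp add: L_def comp_assoc[symmetric])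
  show "\<forall>A\<in>sets m. emeasure m ((\<lambda>g. t \<circ> g) -` A \<inter> space m) = emeasure m A"
  proof
    fix A assume A: "A \<in> sets m"
    then have Asub: "A \<subseteq> Aff q" using sets.sets_into_space space_m by blast
    have "(\<lambda>g. t \<circ> g) -` A \<inter> space m = (\<lambda>g. t \<circ> g) ` A"
    proof
      show "(\<lambda>g. t \<circ> g) -` A \<inter> space m \<subseteq> (\<lambda>g. t \<circ> g) ` A"
      proof
        fix g assume "g \<in> (\<lambda>g. t \<circ> g) -` A \<inter> space m"
        then have "t \<circ> g \<in> A" by simp
        moreover have "g = t \<circ> (t \<circ> g)" using LL by (simp add: L_def comp_assoc[symmetric])
        ultimately show "g \<in> (\<lambda>g. t \<circ> g) ` A" by blast
      qed
      show "(\<lambda>g. t \<circ> g) ` A \<subseteq> (\<lambda>g. t \<circ> g) -` A \<inter> space m"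
        using Asub LA LL space_m by (auto simp: L_def comp_assoc[symmetric])
    qed
    then show "emeasure m ((\<lambda>g. t \<circ> g) -` A \<inter> space m) = emeasure m A"
      using haar t A by (simp add: is_left_haar_def)
  qed
qed

lemma swap_eq:
  assumes w: "w \<in> verts q" and ab: "a < q" "b < q" and troot: "tau q w a b root = root"
  shows "emeasure nu (cyl q (child w a)) = emeasure nu (cyl q (child w b))"
proof -
  define t where "t = tau q w a b"
  have t: "t \<in> Aff q" using tau_Aff[OF ab] by (simp add: t_def)
  have tt: "\<forall>x. t (t x) = x" using tau_tau[OF ab] by (simp add: t_def)
  define Ea where "Ea = cyl q (child w a)"
  define Eb where "Eb = cyl q (child w b)"
  have Ea: "Ea \<in> sets nu" using cyl_sets'[OF child_verts[OF w ab(1)]] by (simp add: Ea_def)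
  have Eb: "Eb \<in> sets nu" using cyl_sets'[OF child_verts[OF w ab(2)]] by (simp add: Eb_def)
  define F where "F g = emeasure nu {xi \<in> ends q. act_end q g xi \<in> Ea} * ennreal (p root (g root))" for g
  have "emeasure nu Eb = conv q m p nu Eb" using inv Eb by (simp add: mu_invariant_def)
  also have "\<dots> = (\<integral>\<^sup>+g. F (t \<circ> g) \<partial>m)"
    unfolding conv_def
  proof (rule nn_integral_cong)
    fix g assume "g \<in> space m"
    then have g: "g \<in> Aff q" using space_m by simp
    have "{xi \<in> ends q. act_end q (t \<circ> g) xi \<in> Ea} = {xi \<in> ends q. act_end q g xi \<in> Eb}"
    proof (intro Collect_cong conj_cong refl)
      fix xi assume xi: "xi \<in> ends q"
      have e: "act_end q g xi \<in> ends q" using act_end_props[OF g xi] by blast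
      have "act_end q (t \<circ> g) xi = tauE w a b (act_end q g xi)"
        using act_end_comp[OF t g xi] act_tau[OF ab e] by (simp add: t_def)
      then show "act_end q (t \<circ> g) xi \<in> Ea \<longleftrightarrow> act_end q g xi \<in> Eb"
        using tauE_cyl[OF ab w e] by (simp add: Ea_def Eb_def)
    qed
    moreover have "p root (t (g root)) = p root (g root)"
    proof -
      have gr: "g root \<in> verts q" using Aff_verts[OF g root_v] .
      have tr: "t root = root" using troot by (simp add: t_def)
      have "up root (t (g root)) = up root (g root)" "up (t (g root)) root = up (g root) root"
        using up_Aff[OF t root_v gr] up_Aff[OF t gr root_v] tr by auto
      then show ?thesis using semi root_v gr Aff_verts[OF t gr] unfolding semi_isotropic_def by blast
    qed
    ultimately show "emeasure nu {xi \<in> ends q. act_end q g xi \<in> Eb} * ennreal (p root (g root)) = F (t \<circ> g)"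
      by (simp add: F_def)
  qed
  also have "\<dots> = integral\<^sup>N m F" by (rule left_transl[OF t tt])
  also have "\<dots> = conv q m p nu Ea" unfolding conv_def F_def ..
  also have "\<dots> = emeasure nu Ea" using inv Ea by (simp add: mu_invariant_def)
  finally show ?thesis by (simp add: Ea_def Eb_def)
qed

end


definition anco :: "nat \<Rightarrow> vtx" where
  "anco j = (- int j, \<lambda>_. 0)"

lemma anco_verts: "0 < q \<Longrightarrow> anco j \<in> verts q"
  by (auto simp: anco_def verts_def)

lemma anco_pred: "(pred ^^ j) root = anco j"
  using funpow_pred[of 0 "\<lambda>_. 0" 2 j] by (simp add: root_def anco_def tr_def verts_def fun_eq_iff)

lemma up_end_le_cyl:
  assumes y: "(h, f) \<in> verts q" and xi: "xi \<in> ends q"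
  shows "up_end (h, f) xi \<le> n \<longleftrightarrow> xi \<in> cyl q ((pred ^^ n) (h, f))"
proof -
  obtain m1 m2 where m: "\<forall>k<m1. f k = 0" "\<forall>k<m2. xi k = 0" using verts_low[OF y] ends_low[OF xi] by blast
  have v: "(h - int n, tr f (h - int n)) \<in> verts q" using tr_in_verts[OF y] by simp
  have "up_end (h, f) xi \<le> n \<longleftrightarrow> h - int n \<le> ml h f xi" using up_end_eq[OF y xi] by auto
  also have "\<dots> \<longleftrightarrow> (\<forall>k<h - int n. f k = xi k)" by (rule ml_ge_iff[OF m]) simp
  also have "\<dots> \<longleftrightarrow> xi \<in> cyl q ((pred ^^ n) (h, f))"
    unfolding funpow_pred[OF y] cyl_iff[OF v] using xi by (auto simp: tr_def)
  finally show ?thesis .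
qed

lemma cyl_children:
  assumes w: "w \<in> verts q"
  shows "cyl q w = (\<Union>c<q. cyl q (child w c))"
proof -
  obtain h f where e: "w = (h, f)" by (cases w)
  have wv: "(h, f) \<in> verts q" using w e by simp
  show ?thesis
  proof
    show "cyl q w \<subseteq> (\<Union>c<q. cyl q (child w c))"
    proof
      fix xi assume "xi \<in> cyl q w"
      then have xi: "xi \<in> ends q" "\<forall>n<h. xi n = f n" using cyl_iff[OF wv] e by auto
      have "xi h < q" using xi(1) by (simp add: ends_def)
      moreover have "xi \<in> cyl q (child w (xi h))" using cyl_child_iff[OF w \<open>xi h < q\<close>] xi e by simp
      ultimately show "xi \<in> (\<Union>c<q. cyl q (child w c))" by blast
    qed
    show "(\<Union>c<q. cyl q (child w c)) \<subseteq> cyl q w"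
      using cyl_child_iff[OF w] cyl_iff[OF wv] e by auto
  qed
qed

lemma cyl_children_disj: "w \<in> verts q \<Longrightarrow> disjoint_family_on (\<lambda>c. cyl q (child w c)) {..<q}"
  unfolding disjoint_family_on_def using cyl_child_iff by fastforce

context setting
begin

definition aj :: "nat \<Rightarrow> ennreal" where
  "aj j = emeasure nu (Omega q j root)"

lemma Omega_cyl: "Omega q j root = {xi \<in> ends q. up_end root xi = j}"
  by (simp add: Omega_def)

lemma cyl_anco_iff: "xi \<in> cyl q (anco j) \<longleftrightarrow> xi \<in> ends q \<and> up_end root xi \<le> j"
proof -
  have "xi \<in> ends q \<Longrightarrow> up_end root xi \<le> j \<longleftrightarrow> xi \<in> cyl q ((pred ^^ j) root)"
    using up_end_le_cyl[of 0 "\<lambda>_. 0" q xi j] root_v by (simp add: root_def)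
  then show ?thesis using anco_pred by (auto simp: cyl_def)
qed

lemma Omega0: "Omega q 0 root = cyl q (anco 0)"
  using cyl_anco_iff[where j=0] by (auto simp: Omega_def)

lemma OmegaSuc: "Omega q (Suc j) root = cyl q (anco (Suc j)) - cyl q (anco j)"
  using cyl_anco_iff[where j=j] cyl_anco_iff[where j="Suc j"] by (auto simp: Omega_def)

lemma Omega_sets: "Omega q j root \<in> sets nu"
  by (cases j) (auto simp: Omega0 OmegaSuc intro!: cyl_sets' anco_verts q0)

lemma nu_anco: "emeasure nu (cyl q (anco j)) = (\<Sum>i\<le>j. aj i)"
proof (induction j)
  case 0 then show ?case by (simp add: aj_def Omega0)
next
  case (Suc j)
  have sub: "cyl q (anco j) \<subseteq> cyl q (anco (Suc j))" using cyl_anco_iff by auto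
  have "cyl q (anco (Suc j)) = cyl q (anco j) \<union> Omega q (Suc j) root" using sub OmegaSuc by auto
  moreover have "emeasure nu (cyl q (anco j)) + emeasure nu (Omega q (Suc j) root) = emeasure nu (cyl q (anco j) \<union> Omega q (Suc j) root)"
    by (rule plus_emeasure) (auto simp: OmegaSuc cyl_sets' anco_verts q0 Omega_sets)
  ultimately have "emeasure nu (cyl q (anco (Suc j))) = emeasure nu (cyl q (anco j)) + emeasure nu (Omega q (Suc j) root)"
    by simp
  then show ?case using Suc by (simp add: aj_def)
qed

lemma nu_children:
  assumes w: "w \<in> verts q"
  shows "emeasure nu (cyl q w) = (\<Sum>c<q. emeasure nu (cyl q (child w c)))"
  unfolding cyl_children[OF w]
  by (rule sum_emeasure[symmetric]) (auto intro!: cyl_sets' child_verts w cyl_children_disj)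

lemma tau_root:
  assumes "\<not> passes w root \<or> (a \<noteq> 0 \<and> b \<noteq> 0)"
  shows "tau q w a b root = root"
  using assms by (auto simp: tau_def root_def sw_def fun_eq_iff)

lemma children_equal:
  assumes w: "w \<in> verts q" and np: "\<not> passes w root" and c: "c < q"
  shows "emeasure nu (cyl q w) = of_nat q * emeasure nu (cyl q (child w c))"
proof -
  have "emeasure nu (cyl q w) = (\<Sum>c'<q. emeasure nu (cyl q (child w c)))"
    unfolding nu_children[OF w]
    by (rule sum.cong[OF refl]) (metis swap_eq[OF w _ c] tau_root np lessThan_iff)
  then show ?thesis by simp
qed

end


definition Vf :: "(nat \<Rightarrow> ennreal) \<Rightarrow> nat \<Rightarrow> nat \<Rightarrow> nat \<Rightarrow> ennreal" where
  "Vf A q r d = (if d = 0 then (\<Sum>i\<le>r. A i) else if r = 0 then A 0 * ennreal (1 / real q ^ d)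
      else A r * ennreal (1 / ((real q - 1) * real q ^ (d - 1))))"

lemma ml_unique:
  assumes "L \<le> H" "\<forall>n<L. f n = g n" "\<forall>L'. L' \<le> H \<and> (\<forall>n<L'. f n = g n) \<longrightarrow> L' \<le> L"
  shows "ml H f g = L"
  unfolding ml_def by (rule Greatest_equality) (use assms in auto)

lemma div_nat_ennreal:
  assumes "y = of_nat n * x" "n > 0"
  shows "x = y * ennreal (1 / real n)"
proof -
  have "y * ennreal (1 / real n) = x * (ennreal (real n) * ennreal (1 / real n))"
    using assms(1) by (simp add: ennreal_of_nat_eq_real_of_nat mult_ac)
  also have "ennreal (real n) * ennreal (1 / real n) = 1"
    using assms(2) by (simp add: ennreal_mult[symmetric])
  finally show ?thesis by simp
qed

lemma ennreal_mult_assoc_const: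
  assumes "0 \<le> x" "0 \<le> y"
  shows "A * ennreal x * ennreal y = A * ennreal (x * y)"
  using assms by (simp add: ennreal_mult mult.assoc)

context setting
begin

lemma root_digits: "root = (0, \<lambda>_. 0)" by (simp add: root_def)

lemma up_root_eqs:
  assumes z: "(h, f) \<in> verts q"
  shows "up root (h, f) = nat (- ml (min 0 h) (\<lambda>_. 0) f)"
        "up (h, f) root = nat (h - ml (min 0 h) (\<lambda>_. 0) f)"
  using up_eq[OF root_v[unfolded root_digits] z] up_eq[OF z root_v[unfolded root_digits]]
  by (simp_all add: root_digits ml_sym min.commute)

lemma Omega_children:
  assumes r: "r \<ge> 1"
  shows "Omega q r root = (\<Union>c\<in>{1..<q}. cyl q (child (anco r) c))"
proof -
  have av: "anco r \<in> verts q" by (rule anco_verts[OF q0])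
  have c0: "child (anco r) 0 = anco (r - 1)" using r by (auto simp: child_def anco_def fun_eq_iff)
  obtain r' where r': "r = Suc r'" using r by (cases r) auto
  have "Omega q r root = cyl q (anco r) - cyl q (anco (r - 1))" using OmegaSuc r' by simp
  also have "\<dots> = (\<Union>c<q. cyl q (child (anco r) c)) - cyl q (child (anco r) 0)"
    unfolding cyl_children[OF av] c0 ..
  also have "\<dots> = (\<Union>c\<in>{1..<q}. cyl q (child (anco r) c))"
  proof (rule set_eqI)
    fix x
    have dj: "x \<notin> cyl q (child (anco r) 0)" if "c \<in> {1..<q}" "x \<in> cyl q (child (anco r) c)" for c
    proof
      assume "x \<in> cyl q (child (anco r) 0)"
      moreover have "cyl q (child (anco r) c) \<inter> cyl q (child (anco r) 0) = {}"
        using cyl_children_disj[OF av] that q0 unfolding disjoint_family_on_def by auto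
      ultimately show False using that by blast
    qed
    show "x \<in> (\<Union>c<q. cyl q (child (anco r) c)) - cyl q (child (anco r) 0) \<longleftrightarrow> x \<in> (\<Union>c\<in>{1..<q}. cyl q (child (anco r) c))"
    proof
      assume "x \<in> (\<Union>c<q. cyl q (child (anco r) c)) - cyl q (child (anco r) 0)"
      then obtain c where "c < q" "x \<in> cyl q (child (anco r) c)" "x \<notin> cyl q (child (anco r) 0)" by blast
      then have "c \<noteq> 0" by metis
      then show "x \<in> (\<Union>c\<in>{1..<q}. cyl q (child (anco r) c))" using \<open>c < q\<close> \<open>x \<in> cyl q (child (anco r) c)\<close> by auto
    next
      assume "x \<in> (\<Union>c\<in>{1..<q}. cyl q (child (anco r) c))"
      then obtain c where "c \<in> {1..<q}" "x \<in> cyl q (child (anco r) c)" by blast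
      then show "x \<in> (\<Union>c<q. cyl q (child (anco r) c)) - cyl q (child (anco r) 0)" using dj by auto
    qed
  qed
  finally show ?thesis .
qed

theorem nu_cyl:
  assumes z: "z \<in> verts q"
  shows "emeasure nu (cyl q z) = Vf aj q (up root z) (up z root)"
proof -
  have "\<forall>z. z \<in> verts q \<and> up z root = d \<longrightarrow> emeasure nu (cyl q z) = Vf aj q (up root z) d" for d
  proof (induction d)
    case 0
    show ?case
    proof (intro allI impI)
      fix z assume zz: "z \<in> verts q \<and> up z root = 0"
      obtain h f where e: "z = (h, f)" by (cases z)
      have zv: "(h, f) \<in> verts q" using zz e by simp
      obtain m where m: "\<forall>n<m. f n = 0" using verts_low[OF zv] by blast
      define L where "L = ml (min 0 h) (\<lambda>_. 0) f"
      have z0: "\<forall>n<(0::int). (\<lambda>_. 0::nat) n = 0" by simp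
      note P = ml_props[OF z0 m, where H="min 0 h"]
      have "h \<le> L" using zz up_root_eqs(2)[OF zv] e by (simp add: L_def)
      moreover have Lle: "L \<le> min 0 h" using P(1) unfolding L_def .
      ultimately have hL: "h = L" "h \<le> 0" by auto
      have "f = (\<lambda>_. 0)"
      proof
        fix n show "f n = 0"
        proof (cases "n < h")
          case True
          then have "n < L" using hL by simp
          then show ?thesis using P(2) unfolding L_def[symmetric] by simp
        next
          case False
          then show ?thesis using zv by (simp add: verts_def)
        qed
      qed
      then have "z = anco (nat (- h))" using e hL by (simp add: anco_def)
      moreover have "up root z = nat (- L)" using up_root_eqs(1)[OF zv] e unfolding L_def by simp
      then have "up root z = nat (- h)" using hL by simp
      ultimately show "emeasure nu (cyl q z) = Vf aj q (up root z) 0"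
        using nu_anco by (simp add: Vf_def)
    qed
  next
    case (Suc d)
    show ?case
    proof (intro allI impI)
      fix z assume zz: "z \<in> verts q \<and> up z root = Suc d"
      obtain h f where e: "z = (h, f)" by (cases z)
      have zv: "(h, f) \<in> verts q" using zz e by simp
      obtain m where m: "\<forall>n<m. f n = 0" using verts_low[OF zv] by blast
      define L where "L = ml (min 0 h) (\<lambda>_. 0) f"
      have z0: "\<forall>n<(0::int). (\<lambda>_. 0::nat) n = 0" by simp
      note P = ml_props[OF z0 m]
      have L0: "L \<le> 0" "L \<le> h" "\<forall>n<L. f n = 0" using P(1,2)[of "min 0 h"] by (auto simp: L_def)
      have Lmax: "L' \<le> L" if "L' \<le> 0" "L' \<le> h" "\<forall>n<L'. f n = 0" for L'
        using P(3)[of L' "min 0 h"] that by (auto simp: L_def)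
      have "nat (h - L) = Suc d" using zz up_root_eqs(2)[OF zv] e by (simp add: L_def)
      then have hd: "h - L = int (Suc d)" by (auto simp: nat_eq_iff split: if_splits)
      have ur: "up root z = nat (- L)" using up_root_eqs(1)[OF zv] e by (simp add: L_def)
      define w where "w = (h - 1, f(h - 1 := 0))"
      have w_pred: "w = pred z" by (simp add: w_def e pred_def)
      have wv: "w \<in> verts q" using pred_in_verts[OF zv] e w_pred by simp
      have fh: "f (h - 1) < q" using zv by (simp add: verts_def)
      have zc: "z = child w (f (h - 1))" by (simp add: child_def w_def e)
      have Lw: "ml (min 0 (h - 1)) (\<lambda>_. 0) (f(h - 1 := 0)) = L"
      proof (rule ml_unique)
        show "L \<le> min 0 (h - 1)" using L0 hd by simp
        show "\<forall>n<L. 0 = (f(h - 1 := 0)) n" using L0 hd by auto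
        show "\<forall>L'. L' \<le> min 0 (h - 1) \<and> (\<forall>n<L'. 0 = (f(h - 1 := 0)) n) \<longrightarrow> L' \<le> L"
        proof (intro allI impI)
          fix L' assume L': "L' \<le> min 0 (h - 1) \<and> (\<forall>n<L'. 0 = (f(h - 1 := 0)) n)"
          then have "\<forall>n<L'. f n = 0" by (metis fun_upd_other less_le_trans min.boundedE order.irrefl)
          then show "L' \<le> L" using Lmax L' by simp
        qed
      qed
      have wv': "(h - 1, f(h - 1 := 0)) \<in> verts q" using wv w_def by simp
      have urw: "up root w = up root z" and uwr: "up w root = d"
        using up_root_eqs[OF wv'] Lw ur hd by (simp_all add: w_def min_def)
      have IH: "emeasure nu (cyl q w) = Vf aj q (up root z) d" using Suc.IH wv uwr urw by metis
      show "emeasure nu (cyl q z) = Vf aj q (up root z) (Suc d)"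
      proof (cases "passes w root")
        case False
        have "emeasure nu (cyl q w) = of_nat q * emeasure nu (cyl q z)"
          using children_equal[OF wv False fh] zc by simp
        then have zq: "emeasure nu (cyl q z) = Vf aj q (up root z) d * ennreal (1 / real q)"
          using IH div_nat_ennreal q0 by metis
        have nd: "up root z = 0 \<or> d \<noteq> 0"
        proof (rule ccontr)
          assume "\<not> (up root z = 0 \<or> d \<noteq> 0)"
          then have "L < 0" "d = 0" using ur by auto
          then have "h - 1 = L" using hd by simp
          then have "passes w root" using L0 \<open>L < 0\<close> by (auto simp: passes_def w_def root_def)
          then show False using False by simp
        qed
        show ?thesis
        proof (cases "up root z = 0")
          case True
          have "Vf aj q 0 d * ennreal (1 / real q) = Vf aj q 0 (Suc d)"
          proof (cases d)
            case 0 then show ?thesis by (simp add: Vf_def)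
          next
            case (Suc d')
            have "Vf aj q 0 d * ennreal (1 / real q) = aj 0 * ennreal (1 / real q ^ d * (1 / real q))"
              using Suc by (simp add: Vf_def ennreal_mult_assoc_const del: power_Suc)
            also have "1 / real q ^ d * (1 / real q) = 1 / real q ^ Suc d" by simp
            finally show ?thesis by (simp add: Vf_def del: power_Suc)
          qed
          then show ?thesis using zq True by simp
        next
          case False
          then have "d \<noteq> 0" using nd by simp
          then obtain d' where d': "d = Suc d'" by (cases d) auto
          have qq: "real q - 1 > 0" using q2 by simp
          have "ennreal (1 / ((real q - 1) * real q ^ d')) * ennreal (1 / real q)
              = ennreal (1 / ((real q - 1) * real q ^ d') * (1 / real q))"
            using qq by (simp add: ennreal_mult[symmetric])
          also have "1 / ((real q - 1) * real q ^ d') * (1 / real q) = 1 / ((real q - 1) * real q ^ d)"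
            using d' by (simp add: mult_ac)
          finally have "ennreal (1 / ((real q - 1) * real q ^ d')) * ennreal (1 / real q) = ennreal (1 / ((real q - 1) * real q ^ d))" .
          then show ?thesis using zq False d' by (simp add: Vf_def mult.assoc del: power_Suc)
        qed
      next
        case True
        then have h1: "h - 1 < 0" "\<forall>n<h - 1. f n = 0" by (auto simp: passes_def w_def root_def)
        then have "h - 1 \<le> L" using Lmax[of "h - 1"] by simp
        then have hL: "h - 1 = L" "d = 0" using hd by auto
        define r where "r = nat (- L)"
        have r1: "r \<ge> 1" using h1 hL by (simp add: r_def)
        have "(f(h - 1 := 0)) x = 0" for x
        proof (cases "x < h - 1")
          case True then show ?thesis using h1 by simp
        next
          case False
          then have "x = h - 1 \<or> x \<ge> h" by linarith
          then show ?thesis using zv by (auto simp: verts_def)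
        qed
        then have wa: "w = anco r" using h1 hL by (auto simp: w_def anco_def r_def fun_eq_iff)
        have f0: "f (h - 1) \<noteq> 0"
        proof
          assume "f (h - 1) = 0"
          then have "\<forall>n<h. f n = 0" using h1 by (metis le_less zle_diff1_eq)
          then have "h \<le> L" using Lmax[of h] h1 by simp
          then show False using hL by simp
        qed
        have eq: "emeasure nu (cyl q (child w c)) = emeasure nu (cyl q z)" if "c \<in> {1..<q}" for c
          using swap_eq[OF wv _ fh tau_root] that f0 zc by auto
        have "aj r = emeasure nu (\<Union>c\<in>{1..<q}. cyl q (child (anco r) c))"
          by (simp add: aj_def Omega_children[OF r1])
        also have "\<dots> = (\<Sum>c\<in>{1..<q}. emeasure nu (cyl q (child (anco r) c)))"
        proof (rule sum_emeasure[symmetric])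
          show "(\<lambda>c. cyl q (child (anco r) c)) ` {1..<q} \<subseteq> sets nu"
            by (auto intro!: cyl_sets' child_verts anco_verts q0)
          show "disjoint_family_on (\<lambda>c. cyl q (child (anco r) c)) {1..<q}"
            using cyl_children_disj[OF anco_verts[OF q0]] by (rule disjoint_family_on_mono[rotated]) auto
        qed simp
        also have "\<dots> = of_nat (q - 1) * emeasure nu (cyl q z)" using eq wa by simp
        finally have "emeasure nu (cyl q z) = aj r * ennreal (1 / real (q - 1))"
          using div_nat_ennreal[of "aj r" "q - 1"] q2 by simp
        moreover have "up root z = r" using ur by (simp add: r_def)
        ultimately show ?thesis using hL r1 q2 by (simp add: Vf_def of_nat_diff)
      qed
    qed
  qed
  then show ?thesis using z by blast
qed

end


lemma topspace_end: "0 < q \<Longrightarrow> topspace (end_top q) = ends q"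
proof -
  assume q: "0 < q"
  have "\<Union>{{xi \<in> ends q. on_geo x xi} | x. x \<in> verts q} = ends q"
  proof
    show "ends q \<subseteq> \<Union>{{xi \<in> ends q. on_geo x xi} | x. x \<in> verts q}"
    proof
      fix xi assume xi: "xi \<in> ends q"
      then have "xi \<in> {xi' \<in> ends q. on_geo (geo xi 0) xi'}" by (auto simp: on_geo_def)
      then show "xi \<in> \<Union>{{xi \<in> ends q. on_geo x xi} | x. x \<in> verts q}"
        using geo_in_verts[OF xi] by blast
    qed
  qed auto
  then show ?thesis by (simp add: end_top_def)
qed

lemma cyl_geo: "x \<in> verts q \<Longrightarrow> xi \<in> cyl q x \<Longrightarrow> x = geo xi (fst x)"
  by (auto simp: cyl_def on_geo_def geo_def)

lemma cyl_geo_mono: "xi \<in> ends q \<Longrightarrow> h' \<le> h \<Longrightarrow> cyl q (geo xi h) \<subseteq> cyl q (geo xi h')"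
  using geo_in_verts[of xi q] by (auto simp: geo_eq cyl_iff tr_def)

lemma in_cyl_geo: "xi \<in> ends q \<Longrightarrow> xi \<in> cyl q (geo xi h)"
  by (auto simp: cyl_def on_geo_def)

lemma open_basic:
  assumes "openin (end_top q) U" "xi \<in> U"
  shows "\<exists>x\<in>verts q. xi \<in> cyl q x \<and> cyl q x \<subseteq> U"
proof -
  have "generate_topology_on {{xi \<in> ends q. on_geo x xi} | x. x \<in> verts q} U"
    using assms(1) by (simp add: end_top_def openin_topology_generated_by_iff)
  then show ?thesis using assms(2)
  proof (induction arbitrary: xi)
    case Empty then show ?case by simp
  next
    case (Int a b)
    have "xi \<in> a" "xi \<in> b" using Int.prems by auto
    then obtain x1 x2 where x: "x1 \<in> verts q" "xi \<in> cyl q x1" "cyl q x1 \<subseteq> a"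
      "x2 \<in> verts q" "xi \<in> cyl q x2" "cyl q x2 \<subseteq> b" using Int.IH by metis
    have xi: "xi \<in> ends q" using x(2) by (simp add: cyl_def)
    define h where "h = max (fst x1) (fst x2)"
    have "cyl q (geo xi h) \<subseteq> cyl q x1" using cyl_geo_mono[OF xi, of "fst x1" h] cyl_geo[OF x(1,2)] by (simp add: h_def)
    moreover have "cyl q (geo xi h) \<subseteq> cyl q x2" using cyl_geo_mono[OF xi, of "fst x2" h] cyl_geo[OF x(4,5)] by (simp add: h_def)
    ultimately have s: "cyl q (geo xi h) \<subseteq> a \<inter> b" using x(3,6) by blast
    show ?case using s in_cyl_geo[OF xi, of h] geo_in_verts[OF xi, of h] by blast
  next
    case (UN K)
    then obtain k where "k \<in> K" "xi \<in> k" by blast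
    then show ?case using UN.IH by blast
  next
    case (Basis s)
    then obtain x where "x \<in> verts q" "s = cyl q x" by (auto simp: cyl_def)
    then show ?case using Basis.prems by blast
  qed
qed

lemma cyl_compact:
  assumes x0: "x0 \<in> verts q"
  shows "compactin (end_top q) (cyl q x0)"
  unfolding compactin_def
proof (intro conjI allI impI)
  have q: "0 < q" using verts_q[OF x0] .
  show "cyl q x0 \<subseteq> topspace (end_top q)" using topspace_end[OF q] by (auto simp: cyl_def)
  fix U assume U: "(\<forall>u\<in>U. openin (end_top q) u) \<and> cyl q x0 \<subseteq> \<Union>U"
  define bad where "bad v \<longleftrightarrow> \<not> (\<exists>F. finite F \<and> F \<subseteq> U \<and> cyl q v \<subseteq> \<Union>F)" for v
  show "\<exists>F. finite F \<and> F \<subseteq> U \<and> cyl q x0 \<subseteq> \<Union>F"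
  proof (rule ccontr)
    assume "\<not> (\<exists>F. finite F \<and> F \<subseteq> U \<and> cyl q x0 \<subseteq> \<Union>F)"
    then have b0: "bad x0" by (simp add: bad_def)
    have step: "\<exists>c<q. bad (child v c)" if v: "v \<in> verts q" "bad v" for v
    proof (rule ccontr)
      assume "\<not> (\<exists>c<q. bad (child v c))"
      then have "\<forall>c<q. \<exists>F. finite F \<and> F \<subseteq> U \<and> cyl q (child v c) \<subseteq> \<Union>F" unfolding bad_def by blast
      then obtain Fc where Fc: "\<forall>c<q. finite (Fc c) \<and> Fc c \<subseteq> U \<and> cyl q (child v c) \<subseteq> \<Union>(Fc c)" by metis
      define F where "F = (\<Union>c<q. Fc c)"
      have fF: "finite F" "F \<subseteq> U" using Fc by (auto simp: F_def)
      have sub: "Fc c \<subseteq> F" if "c < q" for c using that unfolding F_def by blast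
      have "cyl q (child v c) \<subseteq> \<Union>F" if "c < q" for c
        using Fc that sub[OF that] by (meson Sup_subset_mono order_trans)
      then have "cyl q v \<subseteq> \<Union>F" unfolding cyl_children[OF v(1)] by (simp add: UN_subset_iff)
      then show False using v(2) fF unfolding bad_def by blast
    qed
    define nxt where "nxt v = child v (SOME c. c < q \<and> bad (child v c))" for v
    define sq where "sq = rec_nat x0 (\<lambda>n v. nxt v)"
    have sq0: "sq 0 = x0" and sqS: "sq (Suc n) = nxt (sq n)" for n by (simp_all add: sq_def)
    have inv: "sq n \<in> verts q \<and> bad (sq n) \<and> fst (sq n) = fst x0 + int n" for n
    proof (induction n)
      case 0 then show ?case using x0 b0 sq0 by simp
    next
      case (Suc n)
      then obtain c where "c < q" "bad (child (sq n) c)" using step by blast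
      then have c: "(SOME c. c < q \<and> bad (child (sq n) c)) < q \<and> bad (child (sq n) (SOME c. c < q \<and> bad (child (sq n) c)))"
        by (metis (mono_tags, lifting) someI)
      then show ?case using Suc child_verts[of "sq n" q] by (simp add: sqS nxt_def child_def)
    qed
    have dig: "snd (sq (n + k)) i = snd (sq n) i" if "i < fst x0 + int n" for n k i
    proof (induction k)
      case 0 then show ?case by simp
    next
      case (Suc k)
      have "snd (sq (n + Suc k)) i = snd (sq (n + k)) i"
        using inv[of "n + k"] that by (simp add: sqS nxt_def child_def)
      then show ?case using Suc by simp
    qed
    define xi where "xi i = (if i < fst x0 then snd x0 i else snd (sq (nat (i - fst x0) + 1)) i)" for i
    have xin: "\<forall>i<fst x0 + int n. xi i = snd (sq n) i" for n
    proof (intro allI impI)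
      fix i assume i: "i < fst x0 + int n"
      show "xi i = snd (sq n) i"
      proof (cases "i < fst x0")
        case True
        then show ?thesis using dig[of i 0 n] sq0 by (simp add: xi_def)
      next
        case False
        define j where "j = nat (i - fst x0) + 1"
        have ij: "i < fst x0 + int j" using False by (simp add: j_def)
        have jn: "j \<le> n" using False i by (simp add: j_def)
        have "snd (sq n) i = snd (sq j) i" using dig[OF ij, of "n - j"] jn by simp
        then show ?thesis using False by (simp add: xi_def j_def)
      qed
    qed
    have xiq: "xi \<in> ends q"
    proof -
      obtain mm where mm: "\<forall>n<mm. snd x0 n = 0" using verts_low[of "fst x0" "snd x0" q] x0 by auto
      have "\<forall>i<min mm (fst x0). xi i = 0" using mm by (simp add: xi_def)
      moreover have "xi i < q" for i
      proof (cases "i < fst x0")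
        case True then show ?thesis using x0 by (cases x0) (simp add: xi_def verts_def)
      next
        case False
        have "sq (nat (i - fst x0) + 1) \<in> verts q" using inv by blast
        then show ?thesis using False by (cases "sq (nat (i - fst x0) + 1)") (simp add: xi_def verts_def)
      qed
      ultimately show ?thesis by (auto simp: ends_def intro!: exI[of _ "min mm (fst x0)"])
    qed
    have xic: "xi \<in> cyl q (sq n)" for n
    proof -
      have v: "(fst (sq n), snd (sq n)) \<in> verts q" using inv[of n] by (metis prod.collapse)
      have "xi \<in> cyl q (fst (sq n), snd (sq n))" unfolding cyl_iff[OF v] using xin[of n] inv[of n] xiq by simp
      then show ?thesis by simp
    qed
    have "xi \<in> cyl q x0" using xic[of 0] unfolding sq0 .
    then have "xi \<in> \<Union>U" using U by blast
    then obtain u where u: "u \<in> U" "xi \<in> u" by blast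
    then obtain y where y: "y \<in> verts q" "xi \<in> cyl q y" "cyl q y \<subseteq> u" using open_basic U by meson
    define n where "n = nat (fst y - fst x0)"
    have "sq n = geo xi (fst (sq n))" using cyl_geo[OF _ xic[of n]] inv by blast
    then have "cyl q (sq n) \<subseteq> cyl q y"
      using cyl_geo_mono[OF xiq, of "fst y" "fst (sq n)"] cyl_geo[OF y(1,2)] inv[of n] by (simp add: n_def)
    then have "cyl q (sq n) \<subseteq> \<Union>{u}" using y by auto
    then have "\<exists>F. finite F \<and> F \<subseteq> U \<and> cyl q (sq n) \<subseteq> \<Union>F" using u(1) by (intro exI[of _ "{u}"]) auto
    then show False using inv[of n] unfolding bad_def by blast
  qed
qed

context setting
begin

lemma aj_finite: "aj j < \<infinity>"
proof -
  have "emeasure nu (cyl q (anco j)) < \<infinity>"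
    using radon cyl_compact[OF anco_verts[OF q0]] by (simp add: radon_on_ends_def)
  moreover have "aj j \<le> (\<Sum>i\<le>j. aj i)" by (rule member_le_sum) auto
  ultimately show ?thesis using nu_anco[of j] by simp
qed

end


definition trans_t :: "nat \<Rightarrow> vtx \<Rightarrow> vtx \<Rightarrow> vtx" where
  "trans_t q x0 y = (if y \<in> verts q then
     (fst y + fst x0, \<lambda>n. if n < fst y + fst x0 then (snd y (n - fst x0) + snd x0 n) mod q else 0) else y)"

definition trans_s :: "nat \<Rightarrow> vtx \<Rightarrow> vtx \<Rightarrow> vtx" where
  "trans_s q x0 y = (if y \<in> verts q then
     (fst y - fst x0, \<lambda>n. if n < fst y - fst x0 then (snd y (n + fst x0) + (q - snd x0 (n + fst x0))) mod q else 0) else y)"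

context
  fixes q :: nat and x0 :: vtx
  assumes x0: "x0 \<in> verts q"
begin

lemma q_pos: "0 < q" using verts_q[OF x0] .

lemma x0_low: "\<exists>m. \<forall>n<m. snd x0 n = 0" using x0 by (cases x0) (auto simp: verts_def)

lemma x0_dig: "snd x0 n < q" using x0 by (cases x0) (auto simp: verts_def)

lemma x0_high: "n \<ge> fst x0 \<Longrightarrow> snd x0 n = 0" using x0 by (cases x0) (auto simp: verts_def)

lemma trans_t_verts: "y \<in> verts q \<Longrightarrow> trans_t q x0 y \<in> verts q"
proof -
  assume y: "y \<in> verts q"
  obtain h f where e: "y = (h, f)" by (cases y)
  obtain m1 where m1: "\<forall>n<m1. f n = 0" using verts_low y e by blast
  obtain m2 where m2: "\<forall>n<m2. snd x0 n = 0" using x0_low by blast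
  have "\<forall>n<min (m1 + fst x0) m2. (f (n - fst x0) + snd x0 n) mod q = 0" using m1 m2 by auto
  then show ?thesis using y q_pos unfolding trans_t_def e verts_def
    by (auto intro!: exI[of _ "min (min (m1 + fst x0) m2) (h + fst x0)"])
qed

lemma trans_s_verts: "y \<in> verts q \<Longrightarrow> trans_s q x0 y \<in> verts q"
proof -
  assume y: "y \<in> verts q"
  obtain h f where e: "y = (h, f)" by (cases y)
  obtain m1 where m1: "\<forall>n<m1. f n = 0" using verts_low y e by blast
  obtain m2 where m2: "\<forall>n<m2. snd x0 n = 0" using x0_low by blast
  have "\<forall>n<min (m1 - fst x0) (m2 - fst x0). (f (n + fst x0) + (q - snd x0 (n + fst x0))) mod q = 0"
    using m1 m2 by auto
  then show ?thesis using y q_pos unfolding trans_s_def e verts_def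
    by (auto intro!: exI[of _ "min (min (m1 - fst x0) (m2 - fst x0)) (h - fst x0)"])
qed

lemma trans_st: "trans_s q x0 (trans_t q x0 y) = y"
proof (cases "y \<in> verts q")
  case True
  obtain h f where e: "y = (h, f)" by (cases y)
  have yv: "(h, f) \<in> verts q" using True e by simp
  have tv: "trans_t q x0 y \<in> verts q" using trans_t_verts True by blast
  have fd: "f n < q" for n using yv by (simp add: verts_def)
  have fz: "n \<ge> h \<Longrightarrow> f n = 0" for n using yv by (simp add: verts_def)
  have d: "(((f n + snd x0 (n + fst x0)) mod q) + (q - snd x0 (n + fst x0))) mod q = f n" for n
  proof -
    have "(((f n + snd x0 (n + fst x0)) mod q) + (q - snd x0 (n + fst x0))) mod q
        = ((f n + snd x0 (n + fst x0)) + (q - snd x0 (n + fst x0))) mod q" by (simp add: mod_add_left_eq)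
    also have "\<dots> = (f n + q) mod q" using x0_dig[of "n + fst x0"] by simp
    also have "\<dots> = f n" using fd[of n] by simp
    finally show ?thesis .
  qed
  show ?thesis using tv True d fz unfolding e trans_s_def
    by (auto simp: trans_t_def fun_eq_iff not_less)
next
  case False
  then show ?thesis using trans_t_verts by (simp add: trans_t_def trans_s_def)
qed

lemma trans_ts: "trans_t q x0 (trans_s q x0 y) = y"
proof (cases "y \<in> verts q")
  case True
  obtain h f where e: "y = (h, f)" by (cases y)
  have yv: "(h, f) \<in> verts q" using True e by simp
  have sv: "trans_s q x0 y \<in> verts q" using trans_s_verts True by blast
  have fd: "f n < q" for n using yv by (simp add: verts_def)
  have fz: "n \<ge> h \<Longrightarrow> f n = 0" for n using yv by (simp add: verts_def)
  have d: "((f n + (q - snd x0 n)) mod q + snd x0 n) mod q = f n" for n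
  proof -
    have "((f n + (q - snd x0 n)) mod q + snd x0 n) mod q = ((f n + (q - snd x0 n)) + snd x0 n) mod q"
      by (simp add: mod_add_left_eq)
    also have "\<dots> = (f n + q) mod q" using x0_dig[of n] by simp
    also have "\<dots> = f n" using fd[of n] by simp
    finally show ?thesis .
  qed
  show ?thesis using sv True d fz unfolding e trans_t_def
    by (auto simp: trans_s_def fun_eq_iff not_less)
next
  case False
  then show ?thesis using trans_s_verts by (simp add: trans_t_def trans_s_def)
qed

lemma trans_t_pred: "y \<in> verts q \<Longrightarrow> trans_t q x0 (pred y) = pred (trans_t q x0 y)"
proof -
  assume y: "y \<in> verts q"
  obtain h f where e: "y = (h, f)" by (cases y)
  have pv: "pred y \<in> verts q" using pred_in_verts[OF y] .
  have tv: "trans_t q x0 y \<in> verts q" using trans_t_verts[OF y] .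
  show ?thesis using y pv unfolding e
    by (auto simp: trans_t_def pred_def fun_eq_iff)
qed

lemma trans_t_Aff: "trans_t q x0 \<in> Aff q"
  unfolding Aff_def
proof (intro CollectI conjI ballI allI impI)
  show "bij_betw (trans_t q x0) (verts q) (verts q)"
    by (rule bij_betw_byWitness[where f'="trans_s q x0"]) (auto simp: trans_st trans_ts trans_t_verts trans_s_verts)
  show "\<And>x. x \<in> verts q \<Longrightarrow> trans_t q x0 (pred x) = pred (trans_t q x0 x)" by (rule trans_t_pred)
  show "\<And>x. x \<notin> verts q \<Longrightarrow> trans_t q x0 x = x" by (simp add: trans_t_def)
qed

lemma trans_s_Aff: "trans_s q x0 \<in> Aff q"
  unfolding Aff_def
proof (intro CollectI conjI ballI allI impI)
  show "bij_betw (trans_s q x0) (verts q) (verts q)"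
    by (rule bij_betw_byWitness[where f'="trans_t q x0"]) (auto simp: trans_st trans_ts trans_t_verts trans_s_verts)
  show "trans_s q x0 (pred x) = pred (trans_s q x0 x)" if x: "x \<in> verts q" for x
  proof -
    have sx: "trans_s q x0 x \<in> verts q" using trans_s_verts[OF x] .
    have "trans_s q x0 (pred x) = trans_s q x0 (pred (trans_t q x0 (trans_s q x0 x)))" by (simp add: trans_ts)
    also have "\<dots> = trans_s q x0 (trans_t q x0 (pred (trans_s q x0 x)))" using trans_t_pred[OF sx] by simp
    also have "\<dots> = pred (trans_s q x0 x)" by (simp add: trans_st)
    finally show ?thesis .
  qed
  show "\<And>x. x \<notin> verts q \<Longrightarrow> trans_s q x0 x = x" by (simp add: trans_s_def)
qed

lemma trans_t_root: "trans_t q x0 root = x0"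
proof -
  have "root \<in> verts q" using root_in_verts[OF q_pos] .
  then show ?thesis using x0_dig x0_high
    by (cases x0) (auto simp: trans_t_def root_def fun_eq_iff not_less)
qed

end

context setting
begin

lemma stab_sets: "stab_root q \<in> sets m"
proof -
  have e: "stab_root q = {g \<in> Aff q. g root = root}" by (simp add: stab_root_def)
  have "stab_root q \<in> {{g \<in> Aff q. g x = y} | x y. x \<in> verts q \<and> y \<in> verts q}"
    unfolding e using root_v by blast
  then have "openin (aff_top q) (stab_root q)" unfolding aff_top_def by (rule topology_generated_by_Basis)
  then show ?thesis using sets_m open_in_borel by simp
qed

lemma coset_sets: "x \<in> verts q \<Longrightarrow> {g \<in> Aff q. g root = x} \<in> sets m"
proof -
  assume x: "x \<in> verts q"
  have "{g \<in> Aff q. g root = x} \<in> {{g \<in> Aff q. g x = y} | x y. x \<in> verts q \<and> y \<in> verts q}"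
    using root_v x by blast
  then have "openin (aff_top q) {g \<in> Aff q. g root = x}" unfolding aff_top_def by (rule topology_generated_by_Basis)
  then show ?thesis using sets_m open_in_borel by simp
qed

lemma coset_measure:
  assumes x: "x \<in> verts q"
  shows "emeasure m {g \<in> Aff q. g root = x} = 1"
proof -
  define t where "t = trans_t q x"
  define s where "s = trans_s q x"
  have t: "t \<in> Aff q" and s: "s \<in> Aff q" using trans_t_Aff[OF x] trans_s_Aff[OF x] by (simp_all add: t_def s_def)
  have ts: "t (s y) = y" for y using trans_ts[OF x] by (simp add: t_def s_def)
  have st: "s (t y) = y" for y using trans_st[OF x] by (simp add: t_def s_def)
  have tr: "t root = x" using trans_t_root[OF x] by (simp add: t_def)
  have "{g \<in> Aff q. g root = x} = (\<lambda>h. t \<circ> h) ` stab_root q"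
  proof
    show "(\<lambda>h. t \<circ> h) ` stab_root q \<subseteq> {g \<in> Aff q. g root = x}"
      using Aff_comp[OF t] tr by (auto simp: stab_root_def)
    show "{g \<in> Aff q. g root = x} \<subseteq> (\<lambda>h. t \<circ> h) ` stab_root q"
    proof
      fix g assume g: "g \<in> {g \<in> Aff q. g root = x}"
      have "s (g root) = root" using g st[of root] tr by simp
      then have "s \<circ> g \<in> stab_root q" using Aff_comp[OF s] g by (auto simp: stab_root_def)
      moreover have "g = t \<circ> (s \<circ> g)" using ts by (simp add: fun_eq_iff)
      ultimately show "g \<in> (\<lambda>h. t \<circ> h) ` stab_root q" by blast
    qed
  qed
  then have "emeasure m {g \<in> Aff q. g root = x} = emeasure m (stab_root q)"
    using haar t stab_sets by (simp add: is_left_haar_def)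
  also have "\<dots> = 1" using haar by (simp add: is_left_haar_def)
  finally show ?thesis .
qed

end


definition VV :: "(nat \<Rightarrow> ennreal) \<Rightarrow> nat \<Rightarrow> nat \<Rightarrow> nat \<Rightarrow> nat \<Rightarrow> ennreal" where
  "VV A q r k i = Vf A q (if i \<le> k then r else r + i - k) (k - i)"

definition Wf :: "(nat \<Rightarrow> ennreal) \<Rightarrow> nat \<Rightarrow> nat \<Rightarrow> nat \<Rightarrow> nat \<Rightarrow> ennreal" where
  "Wf A q r k j = (if j = 0 then VV A q r k 0 else VV A q r k j - VV A q r k (j - 1))"

lemma finite_digit_funs: "finite {f :: int \<Rightarrow> nat. \<forall>n. f n < q \<and> (n < lo \<or> n \<ge> hi \<longrightarrow> f n = 0)}"
proof (rule finite_subset)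
  show "{f :: int \<Rightarrow> nat. \<forall>n. f n < q \<and> (n < lo \<or> n \<ge> hi \<longrightarrow> f n = 0)}
      \<subseteq> (\<lambda>g n. if n \<in> {lo..<hi} then g n else 0) ` (PiE {lo..<hi} (\<lambda>_. {..<q}))"
  proof
    fix f assume f: "f \<in> {f :: int \<Rightarrow> nat. \<forall>n. f n < q \<and> (n < lo \<or> n \<ge> hi \<longrightarrow> f n = 0)}"
    have "f = (\<lambda>n. if n \<in> {lo..<hi} then restrict f {lo..<hi} n else 0)"
      using f by (auto simp: fun_eq_iff)
    moreover have "restrict f {lo..<hi} \<in> PiE {lo..<hi} (\<lambda>_. {..<q})" using f by auto
    ultimately show "f \<in> (\<lambda>g n. if n \<in> {lo..<hi} then g n else 0) ` (PiE {lo..<hi} (\<lambda>_. {..<q}))" by blast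
  qed
  show "finite ((\<lambda>g n. if n \<in> {lo..<hi} then g n else 0) ` (PiE {lo..<hi} (\<lambda>_. {..<q})))"
    by (intro finite_imageI finite_PiE) auto
qed

context setting
begin

lemma up_pred_root:
  assumes y: "y \<in> verts q"
  shows "up root ((pred ^^ i) y) = (if i \<le> up y root then up root y else up root y + i - up y root)"
        "up ((pred ^^ i) y) root = up y root - i"
proof -
  obtain h f where e: "y = (h, f)" by (cases y)
  have yv: "(h, f) \<in> verts q" using y e by simp
  obtain mm where mm: "\<forall>n<mm. f n = 0" using verts_low[OF yv] by blast
  have z0: "\<forall>n<(0::int). (\<lambda>_. 0::nat) n = 0" by simp
  note P = ml_props[OF z0 mm]
  define L where "L = ml (min 0 h) (\<lambda>_. 0) f"
  have L0: "L \<le> 0" "L \<le> h" "\<forall>n<L. f n = 0" using P(1,2)[of "min 0 h"] by (auto simp: L_def)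
  have Lmax: "L' \<le> L" if "L' \<le> 0" "L' \<le> h" "\<forall>n<L'. f n = 0" for L'
    using P(3)[of L' "min 0 h"] that by (auto simp: L_def)
  have ur: "up root y = nat (- L)" "up y root = nat (h - L)" using up_root_eqs[OF yv] e by (simp_all add: L_def)
  have pe: "(pred ^^ i) y = (h - int i, tr f (h - int i))" using funpow_pred[OF yv] e by simp
  have pv: "(h - int i, tr f (h - int i)) \<in> verts q" using funpow_pred_verts[OF y, of i] pe by simp
  note U = up_root_eqs[OF pv]
  have "up root ((pred ^^ i) y) = (if i \<le> up y root then up root y else up root y + i - up y root) \<and>
   up ((pred ^^ i) y) root = up y root - i"
    proof (cases "int i \<le> h - L")
      case True
      have "ml (min 0 (h - int i)) (\<lambda>_. 0) (tr f (h - int i)) = L"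
      proof (rule ml_unique)
        show "L \<le> min 0 (h - int i)" using True L0 by simp
        show "\<forall>n<L. 0 = tr f (h - int i) n" using True L0 by (auto simp: tr_def)
        show "\<forall>L'. L' \<le> min 0 (h - int i) \<and> (\<forall>n<L'. 0 = tr f (h - int i) n) \<longrightarrow> L' \<le> L"
        proof (intro allI impI)
          fix L' assume L': "L' \<le> min 0 (h - int i) \<and> (\<forall>n<L'. 0 = tr f (h - int i) n)"
          then have "\<forall>n<L'. f n = 0" by (auto simp: tr_def split: if_splits)
          then show "L' \<le> L" using Lmax L' by simp
        qed
      qed
      moreover have "i \<le> up y root" using True ur by simp
      ultimately show ?thesis
        using U pe ur True by (simp add: nat_diff_distrib)
    next
      case False
      have "ml (min 0 (h - int i)) (\<lambda>_. 0) (tr f (h - int i)) = h - int i"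
      proof (rule ml_unique)
        show "h - int i \<le> min 0 (h - int i)" using False L0 by simp
        show "\<forall>n<h - int i. 0 = tr f (h - int i) n" using False L0 by (auto simp: tr_def)
        show "\<forall>L'. L' \<le> min 0 (h - int i) \<and> (\<forall>n<L'. 0 = tr f (h - int i) n) \<longrightarrow> L' \<le> h - int i"
          by simp
      qed
      moreover have "\<not> i \<le> up y root" using False ur L0 by auto
      ultimately show ?thesis
        using U pe ur False L0 by (simp add: nat_diff_distrib)
    qed
  then show "up root ((pred ^^ i) y) = (if i \<le> up y root then up root y else up root y + i - up y root)"
   "up ((pred ^^ i) y) root = up y root - i" by simp_all
qed

lemma cyl_finite: "z \<in> verts q \<Longrightarrow> emeasure nu (cyl q z) \<noteq> \<infinity>"
proof -
  assume z: "z \<in> verts q"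
  have "compactin (end_top q) (cyl q z)" using cyl_compact[OF z] .
  then have "emeasure nu (cyl q z) < \<infinity>" using radon by (simp add: radon_on_ends_def)
  then show ?thesis by simp
qed

lemma nu_Omega_y:
  assumes y: "y \<in> verts q"
  shows "emeasure nu {xi \<in> ends q. up_end y xi = j} = Wf aj q (up root y) (up y root) j"
proof -
  obtain h f where e: "y = (h, f)" by (cases y)
  have yv: "(h, f) \<in> verts q" using y e by simp
  have C: "{xi \<in> ends q. up_end y xi \<le> i} = cyl q ((pred ^^ i) y)" for i
    using up_end_le_cyl[OF yv] e by (auto simp: cyl_def)
  have V: "emeasure nu (cyl q ((pred ^^ i) y)) = VV aj q (up root y) (up y root) i" for i
    using nu_cyl[OF funpow_pred_verts[OF y]] up_pred_root[OF y] by (simp add: VV_def)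
  show ?thesis
  proof (cases j)
    case 0
    have "{xi \<in> ends q. up_end y xi = j} = cyl q ((pred ^^ 0) y)" using C[of 0] 0 by simp
    then show ?thesis using V[of 0] 0 by (simp add: Wf_def)
  next
    case (Suc j')
    have "{xi \<in> ends q. up_end y xi = j} = cyl q ((pred ^^ j) y) - cyl q ((pred ^^ j') y)"
      unfolding C[symmetric] using Suc by auto
    moreover have "cyl q ((pred ^^ j') y) \<subseteq> cyl q ((pred ^^ j) y)" unfolding C[symmetric] using Suc by auto
    ultimately have "emeasure nu {xi \<in> ends q. up_end y xi = j}
        = emeasure nu (cyl q ((pred ^^ j) y)) - emeasure nu (cyl q ((pred ^^ j') y))"
      using emeasure_Diff cyl_finite cyl_sets' funpow_pred_verts[OF y] by metis
    then show ?thesis unfolding V Wf_def using Suc by simp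
  qed
qed

lemma integrand_eq:
  assumes g: "g \<in> Aff q"
  shows "emeasure nu {xi \<in> ends q. act_end q g xi \<in> Omega q j root}
       = Wf aj q (up (g root) root) (up root (g root)) j"
proof -
  obtain y where y: "y \<in> verts q" "g y = root" using Aff_surj[OF g root_v] by blast
  have "{xi \<in> ends q. act_end q g xi \<in> Omega q j root} = {xi \<in> ends q. up_end y xi = j}"
  proof (intro Collect_cong conj_cong refl)
    fix xi assume xi: "xi \<in> ends q"
    have "up_end root (act_end q g xi) = up_end y xi" using up_end_Aff[OF g y(1) xi] y(2) by simp
    then show "act_end q g xi \<in> Omega q j root \<longleftrightarrow> up_end y xi = j"
      using act_end_props[OF g xi] by (simp add: Omega_def)
  qed
  moreover have "up root y = up (g root) root" using up_Aff[OF g root_v y(1)] y(2) by simp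
  moreover have "up y root = up root (g root)" using up_Aff[OF g y(1) root_v] y(2) by simp
  ultimately show ?thesis using nu_Omega_y[OF y(1)] by simp
qed

lemma Tkr_finite: "finite (Tkr q k r root)"
proof -
  have "Tkr q k r root \<subseteq> (\<lambda>f. (int r - int k, f)) ` {f :: int \<Rightarrow> nat. \<forall>n. f n < q \<and> (n < - int k \<or> n \<ge> int r - int k \<longrightarrow> f n = 0)}"
  proof
    fix y assume y: "y \<in> Tkr q k r root"
    obtain h f where e: "y = (h, f)" by (cases y)
    have yv: "(h, f) \<in> verts q" using y e by (simp add: Tkr_def)
    obtain mm where mm: "\<forall>n<mm. f n = 0" using verts_low[OF yv] by blast
    have z0: "\<forall>n<(0::int). (\<lambda>_. 0::nat) n = 0" by simp
    note P = ml_props[OF z0 mm]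
    define L where "L = ml (min 0 h) (\<lambda>_. 0) f"
    have L0: "L \<le> 0" "L \<le> h" "\<forall>n<L. f n = 0" using P(1,2)[of "min 0 h"] by (auto simp: L_def)
    have "up root y = k" "up y root = r" using y by (auto simp: Tkr_def)
    then have "nat (- L) = k" "nat (h - L) = r" using up_root_eqs[OF yv] e by (simp_all add: L_def)
    then have hL: "L = - int k" "h = int r - int k" using L0 by auto
    have "\<forall>n. f n < q \<and> (n < - int k \<or> n \<ge> int r - int k \<longrightarrow> f n = 0)"
      using yv L0 hL by (auto simp: verts_def)
    then show "y \<in> (\<lambda>f. (int r - int k, f)) ` {f :: int \<Rightarrow> nat. \<forall>n. f n < q \<and> (n < - int k \<or> n \<ge> int r - int k \<longrightarrow> f n = 0)}"
      using e hL by blast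
  qed
  moreover have "finite ((\<lambda>f. (int r - int k, f)) ` {f :: int \<Rightarrow> nat. \<forall>n. f n < q \<and> (n < - int k \<or> n \<ge> int r - int k \<longrightarrow> f n = 0)})"
    using finite_digit_funs by blast
  ultimately show ?thesis by (rule finite_subset)
qed

definition Pkr :: "nat \<Rightarrow> nat \<Rightarrow> real" where
  "Pkr k r = p root (SOME x. x \<in> Tkr q k r root)"

lemma p_Tkr: "x \<in> Tkr q k r root \<Longrightarrow> p root x = Pkr k r"
proof -
  assume x: "x \<in> Tkr q k r root"
  define x' where "x' = (SOME x. x \<in> Tkr q k r root)"
  have x': "x' \<in> Tkr q k r root" using x someI unfolding x'_def by metis
  have xx: "x \<in> verts q" "x' \<in> verts q" "up root x = up root x'" "up x root = up x' root"
    using x x' by (auto simp: Tkr_def)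
  have "p root x = p root x'"
    using semi xx root_v unfolding semi_isotropic_def by blast
  then show ?thesis unfolding Pkr_def x'_def .
qed

lemma mukr_eq: "mukr q p k r = ennreal (Pkr k r) * of_nat (card (Tkr q k r root))"
proof -
  have "(\<Sum>x\<in>Tkr q k r root. p root x) = of_nat (card (Tkr q k r root)) * Pkr k r"
    using p_Tkr by simp
  moreover have "Pkr k r \<ge> 0" if ne: "Tkr q k r root \<noteq> {}"
  proof -
    obtain x where x: "x \<in> Tkr q k r root" using ne by blast
    then have "x \<in> verts q" by (simp add: Tkr_def)
    then show ?thesis using p_Tkr[OF x] p_nonneg root_v by metis
  qed
  ultimately show ?thesis unfolding mukr_def
    by (cases "Tkr q k r root = {}") (simp_all add: ennreal_mult ennreal_of_nat_eq_real_of_nat mult.commute)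
qed

definition Akr :: "nat \<Rightarrow> nat \<Rightarrow> (vtx \<Rightarrow> vtx) set" where
  "Akr k r = {g \<in> Aff q. g root \<in> Tkr q k r root}"

lemma Akr_union: "Akr k r = (\<Union>x\<in>Tkr q k r root. {g \<in> Aff q. g root = x})"
  by (auto simp: Akr_def)

lemma Akr_sets: "Akr k r \<in> sets m"
  unfolding Akr_union by (intro sets.finite_UN Tkr_finite coset_sets) (auto simp: Tkr_def)

lemma Akr_measure: "emeasure m (Akr k r) = of_nat (card (Tkr q k r root))"
proof -
  have "emeasure m (Akr k r) = (\<Sum>x\<in>Tkr q k r root. emeasure m {g \<in> Aff q. g root = x})"
    unfolding Akr_union
  proof (rule sum_emeasure[symmetric])
    show "(\<lambda>x. {g \<in> Aff q. g root = x}) ` Tkr q k r root \<subseteq> sets m"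
      using coset_sets by (auto simp: Tkr_def)
    show "disjoint_family_on (\<lambda>x. {g \<in> Aff q. g root = x}) (Tkr q k r root)"
      by (auto simp: disjoint_family_on_def)
    show "finite (Tkr q k r root)" by (rule Tkr_finite)
  qed
  also have "\<dots> = (\<Sum>x\<in>Tkr q k r root. 1)" by (rule sum.cong) (auto simp: coset_measure Tkr_def)
  finally show ?thesis by simp
qed

theorem aj_formula:
  "aj j = (\<Sum>k. \<Sum>r. Wf aj q r k j * mukr q p k r)"
proof -
  define c where "c k r = Wf aj q r k j * ennreal (Pkr k r)" for k r
  have "aj j = conv q m p nu (Omega q j root)" using inv Omega_sets by (simp add: mu_invariant_def aj_def)
  also have "\<dots> = (\<integral>\<^sup>+g. (\<Sum>k. \<Sum>r. c k r * indicator (Akr k r) g) \<partial>m)"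
    unfolding conv_def
  proof (rule nn_integral_cong)
    fix g assume "g \<in> space m"
    then have g: "g \<in> Aff q" using space_m by simp
    define x where "x = g root"
    have xv: "x \<in> verts q" using Aff_verts[OF g root_v] by (simp add: x_def)
    define k0 where "k0 = up root x"
    define r0 where "r0 = up x root"
    have xT: "x \<in> Tkr q k0 r0 root" using xv by (simp add: Tkr_def k0_def r0_def)
    have ind: "indicator (Akr k r) g = (if k = k0 \<and> r = r0 then 1 else (0::ennreal))" for k r
      using g xv by (auto simp: Akr_def Tkr_def k0_def r0_def x_def)
    have "(\<Sum>k. \<Sum>r. c k r * indicator (Akr k r) g) = (\<Sum>k. if k = k0 then c k0 r0 else 0)"
    proof (rule suminf_cong)
      fix k
      show "(\<Sum>r. c k r * indicator (Akr k r) g) = (if k = k0 then c k0 r0 else 0)"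
      proof (cases "k = k0")
        case True
        have "(\<Sum>r. c k r * indicator (Akr k r) g) = (\<Sum>r. if r = r0 then c k0 r else 0)"
          using True ind by (intro suminf_cong) simp
        also have "\<dots> = c k0 r0" using sums_single[of r0 "c k0"] sums_unique by metis
        finally show ?thesis using True by simp
      qed (simp add: ind)
    qed
    also have "\<dots> = c k0 r0" using sums_single[of k0 "\<lambda>_. c k0 r0"] sums_unique by metis
    also have "\<dots> = emeasure nu {xi \<in> ends q. act_end q g xi \<in> Omega q j root} * ennreal (p root (g root))"
      using integrand_eq[OF g] p_Tkr[OF xT] by (simp add: c_def k0_def r0_def x_def)
    finally show "emeasure nu {xi \<in> ends q. act_end q g xi \<in> Omega q j root} * ennreal (p root (g root))
        = (\<Sum>k. \<Sum>r. c k r * indicator (Akr k r) g)" by simp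
  qed
  also have "\<dots> = (\<Sum>k. \<integral>\<^sup>+g. (\<Sum>r. c k r * indicator (Akr k r) g) \<partial>m)"
    by (rule nn_integral_suminf) (auto intro!: borel_measurable_suminf_order borel_measurable_times_ennreal borel_measurable_indicator Akr_sets)
  also have "\<dots> = (\<Sum>k. \<Sum>r. \<integral>\<^sup>+g. c k r * indicator (Akr k r) g \<partial>m)"
    by (rule suminf_cong, rule nn_integral_suminf) (auto intro!: borel_measurable_times_ennreal borel_measurable_indicator Akr_sets)
  also have "\<dots> = (\<Sum>k. \<Sum>r. c k r * emeasure m (Akr k r))"
    by (simp add: nn_integral_cmult_indicator Akr_sets)
  also have "\<dots> = (\<Sum>k. \<Sum>r. Wf aj q r k j * mukr q p k r)"
    by (simp add: c_def Akr_measure mukr_eq mult.assoc)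
  finally show ?thesis .
qed

end


lemma ennreal_suminf_head: "(\<Sum>n. f n :: ennreal) = f 0 + (\<Sum>n. f (Suc n))"
proof -
  have "(\<lambda>n. f (Suc n)) sums (\<Sum>n. f (Suc n))" by (rule summable_sums) simp
  then have "f sums ((\<Sum>n. f (Suc n)) + f 0)" by (rule sums_Suc)
  then show ?thesis using sums_unique by (metis add.commute)
qed

lemma ennreal_suminf_segment: "(\<Sum>n. f n :: ennreal) = (\<Sum>i<j. f i) + (\<Sum>n. f (n + j))"
proof (induction j)
  case 0 then show ?case by simp
next
  case (Suc j)
  have "(\<Sum>n. f (n + j)) = f j + (\<Sum>n. f (n + Suc j))"
    using ennreal_suminf_head[of "\<lambda>n. f (n + j)"] by simp
  then show ?case using Suc by (simp add: add.assoc)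
qed

lemma ennreal_suminf_add2: "(\<Sum>n. f n + g n :: ennreal) = (\<Sum>n. f n) + (\<Sum>n. g n)"
  by (rule suminf_add[symmetric]) simp_all

lemma real_frac1: "(Q::real) \<ge> 2 \<Longrightarrow> 1/((Q-1)*Q^k) - 1/((Q-1)*Q^Suc k) = 1/Q^Suc k"
proof -
  assume Q: "Q \<ge> 2"
  define X where "X = (Q-1)*Q^k"
  have X: "X > 0" using Q by (simp add: X_def)
  have e: "(Q-1)*Q^Suc k = X * Q" by (simp add: X_def)
  have "1/X - 1/(X * Q) = (Q - 1) / (X * Q)" using X Q by (simp add: field_simps)
  also have "\<dots> = 1 / Q^Suc k" using Q by (simp add: X_def)
  finally show ?thesis unfolding e X_def[symmetric] .
qed

lemma real_frac2: "(Q::real) \<ge> 2 \<Longrightarrow> 1/Q^k - 1/Q^Suc k = (Q - 1)/Q * (1/Q^k)"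
proof -
  assume Q: "Q \<ge> 2"
  define X where "X = Q^k"
  have X: "X > 0" using Q by (simp add: X_def)
  have e: "Q^Suc k = X * Q" by (simp add: X_def)
  show ?thesis unfolding e X_def[symmetric] using X Q by (simp add: field_simps)
qed

context setting
begin

definition al :: "nat \<Rightarrow> real" where "al i = enn2real (aj i)"

lemma aj_al: "aj i = ennreal (al i)"
  using aj_finite[of i] by (simp add: al_def)

lemma al_nonneg: "al i \<ge> 0" by (simp add: al_def)

lemma q_real: "real q \<ge> 2" using q2 by simp

lemma sum_aj: "(\<Sum>i\<le>n. aj i) = ennreal (\<Sum>i\<le>n. al i)"
  by (simp add: aj_al al_nonneg sum_nonneg)

lemma Wf_j0_k0: "Wf aj q r 0 0 = (\<Sum>i\<le>r. aj i)"
  by (simp add: Wf_def VV_def Vf_def)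

lemma Wf_j0_r0: "Wf aj q 0 (Suc k) 0 = aj 0 * ennreal (1 / real q ^ Suc k)"
  by (simp add: Wf_def VV_def Vf_def)

lemma Wf_j0: "Wf aj q (Suc r) (Suc k) 0 = aj (Suc r) * ennreal (1 / ((real q - 1) * real q ^ k))"
  by (simp add: Wf_def VV_def Vf_def)

lemma Wf_a: assumes "k < j" shows "Wf aj q r k j = aj (j + r - k)"
proof -
  define n where "n = r + j - 1 - k"
  have j0: "j \<noteq> 0" using assms by simp
  have e1: "VV aj q r k j = (\<Sum>i\<le>Suc n. aj i)" using assms by (simp add: VV_def Vf_def n_def Suc_diff_Suc)
  have e2: "VV aj q r k (j - 1) = (\<Sum>i\<le>n. aj i)"
  proof (cases "j - 1 \<le> k")
    case True
    then have "j = Suc k" using assms by linarith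
    then show ?thesis by (simp add: VV_def Vf_def n_def)
  next
    case False
    then show ?thesis by (simp add: VV_def Vf_def n_def)
  qed
  have "Wf aj q r k j = (\<Sum>i\<le>n. aj i) + aj (Suc n) - (\<Sum>i\<le>n. aj i)"
    using j0 e1 e2 by (simp add: Wf_def)
  also have "\<dots> = aj (Suc n)" using sum_aj[of n] aj_al[of "Suc n"]
    by (simp add: ennreal_minus al_nonneg sum_nonneg del: ennreal_plus flip: ennreal_plus)
  moreover have "Suc n = j + r - k" using assms by (simp add: n_def)
  ultimately show ?thesis by simp
qed

lemma Wf_b: assumes "j \<ge> 1" shows "Wf aj q (Suc r) (j + 1 + k) j = aj (Suc r) * ennreal (1 / real q ^ Suc k)"
proof -
  have n1: "0 \<le> 1 / ((real q - 1) * real q ^ k)" "0 \<le> 1 / ((real q - 1) * real q ^ Suc k)" using q_real by simp_all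
  have e1: "VV aj q (Suc r) (j + 1 + k) j = ennreal (al (Suc r) * (1 / ((real q - 1) * real q ^ k)))"
    unfolding ennreal_mult[OF al_nonneg n1(1)] by (simp add: VV_def Vf_def aj_al)
  have jj: "j - 1 \<le> j + 1 + k" "j + 1 + k - (j - 1) = Suc (Suc k)" using assms by auto
  have e2: "VV aj q (Suc r) (j + 1 + k) (j - 1) = ennreal (al (Suc r) * (1 / ((real q - 1) * real q ^ Suc k)))"
    unfolding ennreal_mult[OF al_nonneg n1(2)] VV_def using jj by (simp add: Vf_def aj_al del: power_Suc)
  have "al (Suc r) * (1 / ((real q - 1) * real q ^ k)) - al (Suc r) * (1 / ((real q - 1) * real q ^ Suc k))
      = al (Suc r) * (1 / real q ^ Suc k)"
    using real_frac1[OF q_real, of k] by (simp only: right_diff_distrib[symmetric])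
  moreover have "0 \<le> al (Suc r) * (1 / ((real q - 1) * real q ^ Suc k))" using al_nonneg n1 by simp
  ultimately have "Wf aj q (Suc r) (j + 1 + k) j = ennreal (al (Suc r) * (1 / real q ^ Suc k))"
    using assms e1 e2 by (simp add: Wf_def ennreal_minus del: power_Suc)
  moreover have "0 \<le> 1 / real q ^ Suc k" by simp
  ultimately show ?thesis unfolding aj_al by (metis ennreal_mult al_nonneg)
qed

lemma Wf_c: assumes "j \<ge> 1" shows "Wf aj q 0 (j + k) j = ennreal ((real q - 1) / real q) * (aj 0 * ennreal (1 / real q ^ k))"
proof -
  have n1: "0 \<le> 1 / real q ^ k" "0 \<le> 1 / real q ^ Suc k" by simp_all
  have e1: "VV aj q 0 (j + k) j = ennreal (al 0 * (1 / real q ^ k))"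
    unfolding ennreal_mult[OF al_nonneg n1(1)] by (cases k) (simp_all add: VV_def Vf_def aj_al del: power_Suc)
  have jj: "j - 1 \<le> j + k" "j + k - (j - 1) = Suc k" using assms by auto
  have e2: "VV aj q 0 (j + k) (j - 1) = ennreal (al 0 * (1 / real q ^ Suc k))"
    unfolding ennreal_mult[OF al_nonneg n1(2)] VV_def using jj by (simp add: Vf_def aj_al del: power_Suc)
  have "al 0 * (1 / real q ^ k) - al 0 * (1 / real q ^ Suc k) = al 0 * ((real q - 1) / real q * (1 / real q ^ k))"
    using real_frac2[OF q_real, of k] by (simp only: right_diff_distrib[symmetric])
  then have "al 0 * (1 / real q ^ k) - al 0 * (1 / real q ^ Suc k) = (real q - 1) / real q * (al 0 * (1 / real q ^ k))"
    by (simp only: mult_ac)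
  moreover have "0 \<le> al 0 * (1 / real q ^ Suc k)" using al_nonneg n1 by simp
  ultimately have "Wf aj q 0 (j + k) j = ennreal ((real q - 1) / real q * (al 0 * (1 / real q ^ k)))"
    using assms e1 e2 by (simp add: Wf_def ennreal_minus del: power_Suc)
  moreover have "0 \<le> (real q - 1) / real q" using q_real by simp
  moreover have "0 \<le> al 0 * (1 / real q ^ k)" using al_nonneg n1 by simp
  ultimately show ?thesis unfolding aj_al by (metis ennreal_mult al_nonneg n1(1))
qed

lemma Wf_d: assumes "j \<ge> 1"
  shows "Wf aj q (Suc r) j j = (\<Sum>i\<le>r. aj i) + ennreal ((real q - 2) / (real q - 1)) * aj (Suc r)"
proof -
  have e1: "VV aj q (Suc r) j j = ennreal ((\<Sum>i\<le>r. al i) + al (Suc r))"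
    by (simp add: VV_def Vf_def aj_al al_nonneg sum_nonneg)
  have n1: "0 \<le> 1 / (real q - 1)" using q_real by simp
  have jj: "j - 1 \<le> j" "j - (j - 1) = Suc 0" using assms by auto
  have e2: "VV aj q (Suc r) j (j - 1) = ennreal (al (Suc r) * (1 / (real q - 1)))"
    unfolding ennreal_mult[OF al_nonneg n1] VV_def using jj by (simp add: Vf_def aj_al)
  have "(\<Sum>i\<le>r. al i) + al (Suc r) - al (Suc r) * (1 / (real q - 1))
      = (\<Sum>i\<le>r. al i) + (real q - 2) / (real q - 1) * al (Suc r)"
    using q_real by (simp add: field_simps)
  moreover have "0 \<le> al (Suc r) * (1 / (real q - 1))" using al_nonneg n1 by simp
  ultimately have "Wf aj q (Suc r) j j = ennreal ((\<Sum>i\<le>r. al i) + (real q - 2) / (real q - 1) * al (Suc r))"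
    using assms unfolding Wf_def e1 e2 by (simp only: ennreal_minus if_False) simp
  moreover have "0 \<le> (real q - 2) / (real q - 1)" using q_real by simp
  ultimately have "Wf aj q (Suc r) j j = ennreal (\<Sum>i\<le>r. al i) + ennreal ((real q - 2) / (real q - 1) * al (Suc r))"
    by (simp only: ennreal_plus[symmetric] sum_nonneg al_nonneg mult_nonneg_nonneg)
  also have "ennreal ((real q - 2) / (real q - 1) * al (Suc r)) = ennreal ((real q - 2) / (real q - 1)) * aj (Suc r)"
    unfolding aj_al using ennreal_mult[OF \<open>0 \<le> (real q - 2) / (real q - 1)\<close> al_nonneg] .
  finally show ?thesis by (simp add: sum_aj)
qed

end


context setting
begin

abbreviation mu where "mu \<equiv> mukr q p"

lemma eq_j0:
  "aj 0 = (\<Sum>k. \<Sum>r. aj (Suc r) * ennreal (1 / ((real q - 1) * real q ^ k)) * mu (Suc k) (Suc r))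
          + (\<Sum>k. aj 0 * ennreal (1 / real q ^ Suc k) * mu (Suc k) 0)
          + (\<Sum>r. (\<Sum>i\<le>r. aj i) * mu 0 r)"
proof -
  define T where "T k r = Wf aj q r k 0 * mu k r" for k r
  have "aj 0 = (\<Sum>k. \<Sum>r. T k r)" using aj_formula[of 0] by (simp add: T_def)
  also have "\<dots> = (\<Sum>r. T 0 r) + (\<Sum>k. \<Sum>r. T (Suc k) r)" by (rule ennreal_suminf_head)
  also have "(\<Sum>k. \<Sum>r. T (Suc k) r) = (\<Sum>k. T (Suc k) 0 + (\<Sum>r. T (Suc k) (Suc r)))"
    by (rule suminf_cong) (rule ennreal_suminf_head)
  also have "\<dots> = (\<Sum>k. T (Suc k) 0) + (\<Sum>k. \<Sum>r. T (Suc k) (Suc r))" by (rule ennreal_suminf_add2)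
  also have "(\<Sum>r. T 0 r) = (\<Sum>r. (\<Sum>i\<le>r. aj i) * mu 0 r)" by (simp add: T_def Wf_j0_k0)
  also have "(\<Sum>k. T (Suc k) 0) = (\<Sum>k. aj 0 * ennreal (1 / real q ^ Suc k) * mu (Suc k) 0)"
    by (simp only: T_def Wf_j0_r0)
  also have "(\<Sum>k. \<Sum>r. T (Suc k) (Suc r)) = (\<Sum>k. \<Sum>r. aj (Suc r) * ennreal (1 / ((real q - 1) * real q ^ k)) * mu (Suc k) (Suc r))"
    by (simp only: T_def Wf_j0)
  finally show ?thesis by (simp add: ac_simps)
qed

lemma eq_j:
  assumes j: "j \<ge> 1"
  shows "aj j = (\<Sum>k<j. \<Sum>r. aj (j + r - k) * mu k r)
          + (\<Sum>k. \<Sum>r. aj (Suc r) * ennreal (1 / real q ^ Suc k) * mu (j + 1 + k) (Suc r))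
          + ennreal ((real q - 1) / real q) * (\<Sum>k. aj 0 * ennreal (1 / real q ^ k) * mu (j + k) 0)
          + (\<Sum>r. ((\<Sum>i\<le>r. aj i) + ennreal ((real q - 2) / (real q - 1)) * aj (Suc r)) * mu j (Suc r))"
proof -
  define T where "T k r = Wf aj q r k j * mu k r" for k r
  define S where "S k = (\<Sum>r. T k r)" for k
  have "aj j = (\<Sum>k. S k)" using aj_formula[of j] by (simp add: T_def S_def)
  also have "\<dots> = (\<Sum>k<j. S k) + (\<Sum>k. S (k + j))" by (rule ennreal_suminf_segment)
  also have "(\<Sum>k. S (k + j)) = S j + (\<Sum>k. S (j + 1 + k))"
    using ennreal_suminf_head[of "\<lambda>k. S (k + j)"] by (simp add: ac_simps)
  also have "S j = T j 0 + (\<Sum>r. T j (Suc r))" unfolding S_def by (rule ennreal_suminf_head)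
  also have "(\<Sum>k. S (j + 1 + k)) = (\<Sum>k. T (j + 1 + k) 0 + (\<Sum>r. T (j + 1 + k) (Suc r)))"
    unfolding S_def by (rule suminf_cong) (rule ennreal_suminf_head)
  also have "\<dots> = (\<Sum>k. T (j + 1 + k) 0) + (\<Sum>k. \<Sum>r. T (j + 1 + k) (Suc r))" by (rule ennreal_suminf_add2)
  finally have e: "aj j = (\<Sum>k<j. S k) + (T j 0 + (\<Sum>r. T j (Suc r)))
      + ((\<Sum>k. T (j + 1 + k) 0) + (\<Sum>k. \<Sum>r. T (j + 1 + k) (Suc r)))" by (simp add: ac_simps)
  have A: "(\<Sum>k<j. S k) = (\<Sum>k<j. \<Sum>r. aj (j + r - k) * mu k r)"
    by (rule sum.cong) (auto simp: S_def T_def Wf_a)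
  have B: "(\<Sum>k. \<Sum>r. T (j + 1 + k) (Suc r)) = (\<Sum>k. \<Sum>r. aj (Suc r) * ennreal (1 / real q ^ Suc k) * mu (j + 1 + k) (Suc r))"
    unfolding T_def using Wf_b[OF j] by simp
  have C: "T j 0 + (\<Sum>k. T (j + 1 + k) 0) = ennreal ((real q - 1) / real q) * (\<Sum>k. aj 0 * ennreal (1 / real q ^ k) * mu (j + k) 0)"
  proof -
    have h1: "(\<Sum>k. T (j + k) 0) = T j 0 + (\<Sum>k. T (j + 1 + k) 0)"
      using ennreal_suminf_head[of "\<lambda>k. T (j + k) 0"] by simp
    have "(\<Sum>k. T (j + k) 0) = (\<Sum>k. ennreal ((real q - 1) / real q) * (aj 0 * ennreal (1 / real q ^ k) * mu (j + k) 0))"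
      unfolding T_def using Wf_c[OF j] by (intro suminf_cong) (simp only: mult.assoc)
    also have "\<dots> = ennreal ((real q - 1) / real q) * (\<Sum>k. aj 0 * ennreal (1 / real q ^ k) * mu (j + k) 0)"
      by (rule ennreal_suminf_cmult)
    finally show ?thesis using h1 by simp
  qed
  have D: "(\<Sum>r. T j (Suc r)) = (\<Sum>r. ((\<Sum>i\<le>r. aj i) + ennreal ((real q - 2) / (real q - 1)) * aj (Suc r)) * mu j (Suc r))"
    unfolding T_def using Wf_d[OF j] by simp
  show ?thesis unfolding e A[symmetric] B[symmetric] C[symmetric] D[symmetric] by (simp add: ac_simps)
qed

end


context setting
begin

lemma mu_zero:
  assumes hyp: "\<forall>x\<in>verts q. \<forall>y\<in>verts q. tdist x y > N \<longrightarrow> p x y = 0" and kr: "k + r > N"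
  shows "mu k r = 0"
proof -
  have "p root x = 0" if "x \<in> Tkr q k r root" for x
  proof -
    have "x \<in> verts q" "up root x = k" "up x root = r" using that by (auto simp: Tkr_def)
    then show ?thesis using hyp root_v kr by (auto simp: tdist_def)
  qed
  then show ?thesis by (simp add: mukr_def)
qed

lemma eq_N:
  assumes hyp: "\<forall>x\<in>verts q. \<forall>y\<in>verts q. tdist x y > N \<longrightarrow> p x y = 0" and j: "j > N"
  shows "aj j = (\<Sum>n\<in>{-int N..int N}. aj (nat (int j + n)) * mu_tilde q p n)"
proof -
  note mz = mu_zero[OF hyp]
  have j1: "j \<ge> 1" using j by simp
  have B: "(\<Sum>k. \<Sum>r. aj (Suc r) * ennreal (1 / real q ^ Suc k) * mu (j + 1 + k) (Suc r)) = 0"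
    using j mz by simp
  have C: "(\<Sum>k. aj 0 * ennreal (1 / real q ^ k) * mu (j + k) 0) = 0"
    using j mz by simp
  have D: "(\<Sum>r. ((\<Sum>i\<le>r. aj i) + ennreal ((real q - 2) / (real q - 1)) * aj (Suc r)) * mu j (Suc r)) = 0"
    using j mz by simp
  have L: "aj j = (\<Sum>k<j. \<Sum>r. aj (j + r - k) * mu k r)"
    using eq_j[OF j1] B C D by simp
  define I where "I = {-int N..int N}"
  define iR where "iR k = (\<Sum>n\<in>I. aj (nat (int j + n)) * (if int k + n \<ge> 0 then mu k (nat (int k + n)) else 0))" for k
  define iL where "iL k = (if k < j then (\<Sum>r. aj (j + r - k) * mu k r) else 0)" for k
  have RiR: "(\<Sum>n\<in>I. aj (nat (int j + n)) * mu_tilde q p n) = (\<Sum>k. iR k)"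
  proof -
    have "(\<Sum>n\<in>I. aj (nat (int j + n)) * mu_tilde q p n)
        = (\<Sum>n\<in>I. \<Sum>k. aj (nat (int j + n)) * (if int k + n \<ge> 0 then mu k (nat (int k + n)) else 0))"
      by (simp add: mu_tilde_def)
    also have "\<dots> = (\<Sum>k. iR k)" unfolding iR_def by (rule suminf_sum[symmetric]) simp
    finally show ?thesis .
  qed
  have eqk: "iR k = iL k" for k
  proof (cases "k > N")
    case True
    have m0: "mu k r = 0" for r using True mz by simp
    have "iR k = 0" unfolding iR_def by (rule sum.neutral) (simp add: m0)
    moreover have "iL k = 0" using True mz by (simp add: iL_def)
    ultimately show ?thesis by simp
  next
    case False
    then have kj: "k < j" using j by simp
    have "(\<Sum>r. aj (j + r - k) * mu k r) = (\<Sum>r\<in>{..N}. aj (j + r - k) * mu k r)"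
      by (rule suminf_finite) (use mz in auto)
    then have iLk: "iL k = (\<Sum>r\<in>{..N}. aj (j + r - k) * mu k r)" using kj by (simp add: iL_def)
    define g where "g r = int r - int k" for r
    have gI: "g ` {..N} \<subseteq> I" using False by (auto simp: g_def I_def)
    have "iR k = (\<Sum>n\<in>g ` {..N}. aj (nat (int j + n)) * (if int k + n \<ge> 0 then mu k (nat (int k + n)) else 0))"
      unfolding iR_def
    proof (rule sum.mono_neutral_right)
      show "finite I" by (simp add: I_def)
      show "g ` {..N} \<subseteq> I" by (rule gI)
      show "\<forall>n\<in>I - g ` {..N}. aj (nat (int j + n)) * (if int k + n \<ge> 0 then mu k (nat (int k + n)) else 0) = 0"
      proof
        fix n assume n: "n \<in> I - g ` {..N}"
        show "aj (nat (int j + n)) * (if int k + n \<ge> 0 then mu k (nat (int k + n)) else 0) = 0"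
        proof (cases "int k + n \<ge> 0")
          case True
          have "nat (int k + n) \<notin> {..N}"
          proof
            assume "nat (int k + n) \<in> {..N}"
            then have "n \<in> g ` {..N}" using True by (auto simp: g_def image_iff intro!: bexI[of _ "nat (int k + n)"])
            then show False using n by simp
          qed
          then have "k + nat (int k + n) > N" by simp
          then show ?thesis using True mz by simp
        qed simp
      qed
    qed
    also have "\<dots> = (\<Sum>r\<in>{..N}. aj (nat (int j + g r)) * (if int k + g r \<ge> 0 then mu k (nat (int k + g r)) else 0))"
      by (subst sum.reindex) (auto simp: g_def inj_on_def)
    also have "\<dots> = (\<Sum>r\<in>{..N}. aj (j + r - k) * mu k r)"
    proof (rule sum.cong[OF refl])
      fix r assume "r \<in> {..N}"
      have "nat (int j + g r) = j + r - k" using kj by (simp add: g_def)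
      moreover have "nat (int k + g r) = r" by (simp add: g_def)
      ultimately show "aj (nat (int j + g r)) * (if int k + g r \<ge> 0 then mu k (nat (int k + g r)) else 0) = aj (j + r - k) * mu k r"
        by (simp add: g_def)
    qed
    finally show ?thesis using iLk by simp
  qed
  have "(\<Sum>k. iL k) = (\<Sum>k<j. \<Sum>r. aj (j + r - k) * mu k r)"
    by (subst suminf_finite[of "{..<j}"]) (auto simp: iL_def)
  then show ?thesis using L RiR eqk by (simp add: I_def)
qed

end


lemma countable_verts: "countable (verts q)"
proof -
  define F where "F = (\<lambda>(h::int, m::int, l::nat list). (h, \<lambda>n. if m \<le> n \<and> n < m + int (length l) then l ! nat (n - m) else 0))"
  have "verts q \<subseteq> range F"
  proof
    fix x assume x: "x \<in> verts q"
    obtain h f where e: "x = (h, f)" by (cases x)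
    have xv: "(h, f) \<in> verts q" using x e by simp
    obtain m0 where m0: "\<forall>n<m0. f n = 0" using verts_low[OF xv] by blast
    define mm where "mm = min m0 h"
    define l where "l = map (\<lambda>i. f (mm + int i)) [0..<nat (h - mm)]"
    have len: "int (length l) = h - mm" by (simp add: l_def mm_def)
    have "F (h, mm, l) = (h, f)"
    proof -
      have "(if mm \<le> n \<and> n < mm + int (length l) then l ! nat (n - mm) else 0) = f n" for n
      proof (cases "mm \<le> n \<and> n < mm + int (length l)")
        case True
        then have "nat (n - mm) < nat (h - mm)" using len by linarith
        then show ?thesis using True by (simp add: l_def)
      next
        case False
        then have "n < m0 \<or> n \<ge> h" using len by (auto simp: mm_def)
        then show ?thesis using False m0 xv by (auto simp: verts_def)
      qed
      then show ?thesis by (simp add: F_def fun_eq_iff)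
    qed
    then show "x \<in> range F" using e by (metis rangeI)
  qed
  moreover have "countable (range F)" by simp
  ultimately show ?thesis by (rule countable_subset)
qed

lemma sets_ends_gen:
  assumes q: "0 < q"
  shows "borel_sets_of (end_top q) = sigma_sets (ends q) (insert {} {cyl q x | x. x \<in> verts q})"
  unfolding borel_sets_of_def topspace_end[OF q]
proof (rule sigma_sets_eqI)
  fix U assume "U \<in> {U. openin (end_top q) U}"
  then have U: "openin (end_top q) U" by simp
  define C where "C = {x \<in> verts q. cyl q x \<subseteq> U}"
  have "U = \<Union>(cyl q ` C)"
  proof
    show "U \<subseteq> \<Union>(cyl q ` C)"
    proof
      fix xi assume "xi \<in> U"
      then obtain x where "x \<in> verts q" "xi \<in> cyl q x" "cyl q x \<subseteq> U" using open_basic[OF U] by blast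
      then show "xi \<in> \<Union>(cyl q ` C)" unfolding C_def by blast
    qed
    show "\<Union>(cyl q ` C) \<subseteq> U" by (auto simp: C_def)
  qed
  moreover have "\<Union>(cyl q ` C) \<in> sigma_sets (ends q) (insert {} {cyl q x | x. x \<in> verts q})"
  proof (rule sigma_sets_UNION)
    have "countable C" by (rule countable_subset[OF _ countable_verts]) (auto simp: C_def)
    then show "countable (cyl q ` C)" by simp
    show "b \<in> sigma_sets (ends q) (insert {} {cyl q x | x. x \<in> verts q})" if "b \<in> cyl q ` C" for b
      using that by (auto simp: C_def intro!: sigma_sets.Basic)
  qed
  ultimately show "U \<in> sigma_sets (ends q) (insert {} {cyl q x | x. x \<in> verts q})" by simp
next
  fix b assume "b \<in> insert {} {cyl q x | x. x \<in> verts q}"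
  then show "b \<in> sigma_sets (ends q) {U. openin (end_top q) U}"
    by (auto intro!: sigma_sets.Basic cyl_open sigma_sets.Empty)
qed

lemma Int_stable_cyl: "Int_stable (insert {} {cyl q x | x. x \<in> verts q})"
  unfolding Int_stable_def
proof (intro ballI)
  fix A B assume A: "A \<in> insert {} {cyl q x | x. x \<in> verts q}" and B: "B \<in> insert {} {cyl q x | x. x \<in> verts q}"
  show "A \<inter> B \<in> insert {} {cyl q x | x. x \<in> verts q}"
  proof (cases "A \<inter> B = {}")
    case False
    then obtain x y where xy: "x \<in> verts q" "y \<in> verts q" "A = cyl q x" "B = cyl q y" using A B by auto
    obtain xi where xi: "xi \<in> cyl q x" "xi \<in> cyl q y" using False xy by auto
    have xe: "xi \<in> ends q" using xi by (simp add: cyl_def)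
    have gx: "x = geo xi (fst x)" and gy: "y = geo xi (fst y)" using cyl_geo xy xi by blast+
    show ?thesis
    proof (cases "fst x \<le> fst y")
      case True
      then have "cyl q y \<subseteq> cyl q x" using cyl_geo_mono[OF xe True] gx gy by simp
      then have "A \<inter> B = cyl q y" using xy by auto
      then show ?thesis using xy(2) by blast
    next
      case False
      then have "cyl q x \<subseteq> cyl q y" using cyl_geo_mono[OF xe, of "fst y" "fst x"] gx gy by simp
      then have "A \<inter> B = cyl q x" using xy by auto
      then show ?thesis using xy(1) by blast
    qed
  qed simp
qed

lemma nu_unique:
  assumes S: "setting q p m nu" and S': "setting q p m nu'"
    and eq: "\<forall>j. emeasure nu' (Omega q j root) = emeasure nu (Omega q j root)"
  shows "nu' = nu"
proof -
  interpret A: setting q p m nu by (rule S)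
  interpret B: setting q p m nu' by (rule S')
  have aeq: "B.aj = A.aj" using eq by (simp add: fun_eq_iff A.aj_def B.aj_def)
  define E where "E = insert {} {cyl q x | x. x \<in> verts q}"
  show ?thesis
  proof (rule measure_eqI_generator_eq[of E "ends q" nu' nu "\<lambda>i. cyl q (anco i)"])
    show "Int_stable E" unfolding E_def by (rule Int_stable_cyl)
    show "E \<subseteq> Pow (ends q)" by (auto simp: E_def cyl_def)
    show "emeasure nu' X = emeasure nu X" if "X \<in> E" for X
      using that A.nu_cyl B.nu_cyl aeq by (auto simp: E_def)
    show "sets nu' = sigma_sets (ends q) E" using B.radon sets_ends_gen[OF A.q0] by (simp add: radon_on_ends_def E_def)
    show "sets nu = sigma_sets (ends q) E" using A.radon sets_ends_gen[OF A.q0] by (simp add: radon_on_ends_def E_def)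
    show "range (\<lambda>i. cyl q (anco i)) \<subseteq> E" using anco_verts[OF A.q0] unfolding E_def by blast
    show "(\<Union>i. cyl q (anco i)) = ends q"
    proof
      show "(\<Union>i. cyl q (anco i)) \<subseteq> ends q" by (auto simp: cyl_def)
      show "ends q \<subseteq> (\<Union>i. cyl q (anco i))"
      proof
        fix xi assume xi: "xi \<in> ends q"
        obtain mm where mm: "\<forall>n<mm. xi n = 0" using ends_low[OF xi] by blast
        have av: "(- int (nat (- mm)), \<lambda>_. 0::nat) \<in> verts q" using anco_verts[OF A.q0, of "nat (- mm)"] unfolding anco_def .
        have "xi \<in> cyl q (anco (nat (- mm)))" unfolding anco_def cyl_iff[OF av] using xi mm by auto
        then show "xi \<in> (\<Union>i. cyl q (anco i))" by blast
      qed
    qed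
    show "emeasure nu' (cyl q (anco i)) \<noteq> \<infinity>" for i using B.cyl_finite anco_verts[OF B.q0] by blast
  qed
qed


theorem lemma4p3:
  fixes q :: nat and p :: "vtx \<Rightarrow> vtx \<Rightarrow> real"
    and m :: "(vtx \<Rightarrow> vtx) measure" and nu :: "bend measure"
  assumes q2: "q \<ge> 2"
    and P: "transition_matrix q p" "irreducible_tm q p" "semi_isotropic q p"
    and haar: "is_left_haar q m"
    and radon: "radon_on_ends q nu"
    and inv: "mu_invariant q m p nu"
  defines "a \<equiv> (\<lambda>j. emeasure nu (Omega q j root))"
    and "mu \<equiv> mukr q p"
  shows
    "(\<forall>nu'. radon_on_ends q nu' \<and> mu_invariant q m p nu' \<and>
            (\<forall>j. emeasure nu' (Omega q j root) = a j) \<longrightarrow> nu' = nu)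
   \<and> a 0 = (\<Sum>k. \<Sum>r. a (Suc r) * ennreal (1 / ((real q - 1) * real q ^ k)) * mu (Suc k) (Suc r))
          + (\<Sum>k. a 0 * ennreal (1 / real q ^ Suc k) * mu (Suc k) 0)
          + (\<Sum>r. (\<Sum>i\<le>r. a i) * mu 0 r)
   \<and> (\<forall>j\<ge>1. a j =
            (\<Sum>k<j. \<Sum>r. a (j + r - k) * mu k r)
          + (\<Sum>k. \<Sum>r. a (Suc r) * ennreal (1 / real q ^ Suc k) * mu (j + 1 + k) (Suc r))
          + ennreal ((real q - 1) / real q) * (\<Sum>k. a 0 * ennreal (1 / real q ^ k) * mu (j + k) 0)
          + (\<Sum>r. ((\<Sum>i\<le>r. a i) + ennreal ((real q - 2) / (real q - 1)) * a (Suc r)) * mu j (Suc r)))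
   \<and> ((\<forall>N::nat. (\<forall>x\<in>verts q. \<forall>y\<in>verts q. tdist x y > N \<longrightarrow> p x y = 0) \<longrightarrow>
         (\<forall>j>N. a j = (\<Sum>n\<in>{-int N..int N}. a (nat (int j + n)) * mu_tilde q p n))))"
proof -
  interpret S: setting q p m nu
    by unfold_locales (use q2 P(1) P(3) haar radon inv in auto)
  have a_eq: "a = S.aj" by (simp add: a_def fun_eq_iff S.aj_def)
  have U: "\<forall>nu'. radon_on_ends q nu' \<and> mu_invariant q m p nu' \<and>
            (\<forall>j. emeasure nu' (Omega q j root) = a j) \<longrightarrow> nu' = nu"
  proof (intro allI impI)
    fix nu' assume h: "radon_on_ends q nu' \<and> mu_invariant q m p nu' \<and> (\<forall>j. emeasure nu' (Omega q j root) = a j)"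
    have S': "setting q p m nu'"
      by unfold_locales (use q2 P(1) P(3) haar h in auto)
    show "nu' = nu" by (rule nu_unique[OF S.setting_axioms S']) (use h in \<open>simp add: a_def\<close>)
  qed
  have E0: "a 0 = (\<Sum>k. \<Sum>r. a (Suc r) * ennreal (1 / ((real q - 1) * real q ^ k)) * mu (Suc k) (Suc r))
          + (\<Sum>k. a 0 * ennreal (1 / real q ^ Suc k) * mu (Suc k) 0)
          + (\<Sum>r. (\<Sum>i\<le>r. a i) * mu 0 r)"
    unfolding a_eq mu_def by (rule S.eq_j0)
  have EJ: "\<forall>j\<ge>1. a j =
            (\<Sum>k<j. \<Sum>r. a (j + r - k) * mu k r)
          + (\<Sum>k. \<Sum>r. a (Suc r) * ennreal (1 / real q ^ Suc k) * mu (j + 1 + k) (Suc r))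
          + ennreal ((real q - 1) / real q) * (\<Sum>k. a 0 * ennreal (1 / real q ^ k) * mu (j + k) 0)
          + (\<Sum>r. ((\<Sum>i\<le>r. a i) + ennreal ((real q - 2) / (real q - 1)) * a (Suc r)) * mu j (Suc r))"
    unfolding a_eq mu_def using S.eq_j by blast
  have EN: "\<forall>N::nat. (\<forall>x\<in>verts q. \<forall>y\<in>verts q. tdist x y > N \<longrightarrow> p x y = 0) \<longrightarrow>
         (\<forall>j>N. a j = (\<Sum>n\<in>{-int N..int N}. a (nat (int j + n)) * mu_tilde q p n))"
    unfolding a_eq using S.eq_N by blast
  show ?thesis using U E0 EJ EN by blast
qed


end
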